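(* The SRT$_{\mathsf{A}}$-definable transformations are closed under union, intersection, and composition. That is: for any linear group $\mathbf{G}$ and finite label sets $\Sigma,\Gamma,\Theta$, (i) if $\mathcal{S}_1,\mathcal{S}_2$ are $(\Sigma,\Gamma,\mathbf{G})$-SRT$_{\mathsf{A}}$, then $[\![\mathcal{S}_1]\!]\cup[\![\mathcal{S}_2]\!]$ and $[\![\mathcal{S}_1]\!]\cap[\![\mathcal{S}_2]\!]$ are each equal to $[\![\mathcal{S}]\!]$ for some $(\Sigma,\Gamma,\mathbf{G})$-SRT$_{\mathsf{A}}$ $\mathcal{S}$; (ii) if $\mathcal{S}_1$ is a $(\Sigma,\Gamma,\mathbf{G})$-SRT$_{\mathsf{A}}$ and $\mathcal{S}_2$ a $(\Gamma,\Theta,\mathbf{G})$-SRT$_{\mathsf{A}}$, then $[\![\mathcal{S}_1]\!]\cdot[\![\mathcal{S}_2]\!]=[\![\mathcal{S}]\!]$ for some $(\Sigma,\Theta,\mathbf{G})$-SRT$_{\mathsf{A}}$ $\mathcal{S}$.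
   Context: A linear group is a triple $\mathbf{G}=(D,\leq,+)$ where $D$ is an infinite set, $\leq$ is a total order on $D$, and $(D,+)$ is a group with identity $0$. For finite label sets $\Sigma$ (input) and $\Gamma$ (output), a $(\Sigma,\Gamma,\mathbf{G})$-streaming register transducer (SRT) is a tuple $\mathcal{S}=(Q,q_0,k,R_0,\Delta)$ where $Q$ is a finite set of states, $q_0\in Q$, $k\in\mathbb{N}$ is the number of registers, $R_0\in D^k$ gives the initial register values, and $\Delta\subseteq Q\times\Sigma\times\{>,=,<\}^k\times\{\mathsf{old},\mathsf{new},\mathsf{add}\}^k\times\{1,\dots,k\}\times\Gamma\times Q$ is a finite set of transitions. A transition $(q,\sigma,l,m,u,\gamma,q')$ enables the step $(q,R)\xrightarrow[(\gamma,d')]{(\sigma,d)}(q',R')$ between configurations ($q\in Q$, $R\in D^k$) iff (1) for every $i$, $d>R[i]$, $d=R[i]$ or $d<R[i]$ according as $l[i]$ is $>$, $=$ or $<$; (2) for every $i$, $R'[i]=R[i]$ if $m[i]=\mathsf{old}$, $R'[i]=d$ if $m[i]=\mathsf{new}$, $R'[i]=R[i]+d$ if $m[i]=\mathsf{add}$; (3) $d'=R'[u]$. A run over a finite data word $s\in(\Sigma\times D)^*$ of length $n$ generating $t\in(\Gamma\times D)^*$ is a sequence of $n$ steps from $(q_0,R_0)$, the $i$-th reading $s[i]$ and emitting $t[i]$, each enabled by a transition of $\Delta$. $s\otimes t$ is the word with $i$-th letter $(s[i],t[i])$, and $[\![\mathcal{S}]\!]=\{s\otimes t:\text{there is a run over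 }s\text{ generating }t\}$. An SRT is add-free (an SRT$_{\mathsf{A}}$) if every transition has update vector in $\{\mathsf{old},\mathsf{new}\}^k$. Composition: for $\mathcal{T}_1$ over $(\Sigma\times D)\times(\Gamma\times D)$ and $\mathcal{T}_2$ over $(\Gamma\times D)\times(\Theta\times D)$, $\mathcal{T}_1\cdot\mathcal{T}_2$ is the set of $s_1\otimes s_2$ ($s_1\in(\Sigma\times D)^*$, $s_2\in(\Theta\times D)^*$) such that some $s_3\in(\Gamma\times D)^*$ has $s_1\otimes s_3\in\mathcal{T}_1$ and $s_3\otimes s_2\in\mathcal{T}_2$. *)

theory Defs
  imports Main
begin

text \<open>Linear group: a type 'd of class linorder (total order) and group_add (group with
identity 0, not necessarily commutative), with infinitely many elements (assumed in the theorem).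
Registers are indexed 0..k-1 (the paper uses 1..k).\<close>

datatype cmp = Gt | Eq | Lt
datatype upd = Old | New | Add

record ('a, 'b, 'd) srt =
  states :: "nat set"
  init   :: nat
  nregs  :: nat
  reg0   :: "'d list"
  trans  :: "(nat \<times> 'a \<times> cmp list \<times> upd list \<times> nat \<times> 'b \<times> nat) set"

definition wf_srt :: "('a, 'b, 'd) srt \<Rightarrow> bool" where
  "wf_srt S \<longleftrightarrow> finite (states S) \<and> init S \<in> states S \<and> length (reg0 S) = nregs S
     \<and> finite (trans S)
     \<and> (\<forall>(q, \<sigma>, l, m, u, \<gamma>, q') \<in> trans S. q \<in> states S \<and> q' \<in> states S
          \<and> length l = nregs S \<and> length m = nregs S \<and> u < nregs S)"

definition add_free :: "('a, 'b, 'd) srt \<Rightarrow> bool" where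
  "add_free S \<longleftrightarrow> (\<forall>(q, \<sigma>, l, m, u, \<gamma>, q') \<in> trans S. set m \<subseteq> {Old, New})"

definition srtA :: "('a, 'b, 'd) srt \<Rightarrow> bool" where
  "srtA S \<longleftrightarrow> wf_srt S \<and> add_free S"

fun cmp_ok :: "cmp \<Rightarrow> 'd::linorder \<Rightarrow> 'd \<Rightarrow> bool" where
  "cmp_ok Gt d r = (d > r)"
| "cmp_ok Eq d r = (d = r)"
| "cmp_ok Lt d r = (d < r)"

fun upd_val :: "upd \<Rightarrow> 'd::group_add \<Rightarrow> 'd \<Rightarrow> 'd" where
  "upd_val Old r d = r"
| "upd_val New r d = d"
| "upd_val Add r d = r + d"

definition step :: "('a, 'b, 'd::{linorder,group_add}) srt \<Rightarrow> nat \<times> 'd list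
     \<Rightarrow> 'a \<times> 'd \<Rightarrow> 'b \<times> 'd \<Rightarrow> nat \<times> 'd list \<Rightarrow> bool" where
  "step S c x y c' \<longleftrightarrow>
     (\<exists>l m u. (fst c, fst x, l, m, u, fst y, fst c') \<in> trans S
        \<and> (\<forall>i < nregs S. cmp_ok (l ! i) (snd x) (snd c ! i))
        \<and> length (snd c') = nregs S
        \<and> (\<forall>i < nregs S. snd c' ! i = upd_val (m ! i) (snd c ! i) (snd x))
        \<and> snd y = snd c' ! u)"

inductive run :: "('a, 'b, 'd::{linorder,group_add}) srt \<Rightarrow> nat \<times> 'd list
     \<Rightarrow> ('a \<times> 'd) list \<Rightarrow> ('b \<times> 'd) list \<Rightarrow> nat \<times> 'd list \<Rightarrow> bool"
  for S where
  run_nil: "run S c [] [] c"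
| run_cons: "step S c x y c'' \<Longrightarrow> run S c'' xs ys c' \<Longrightarrow> run S c (x # xs) (y # ys) c'"

definition sem :: "('a, 'b, 'd::{linorder,group_add}) srt \<Rightarrow> (('a \<times> 'd) \<times> ('b \<times> 'd)) list set" where
  "sem S = {zip s t | s t. length s = length t \<and> (\<exists>c'. run S (init S, reg0 S) s t c')}"

definition comp_tr :: "(('a \<times> 'd) \<times> ('b \<times> 'd)) list set \<Rightarrow> (('b \<times> 'd) \<times> ('c \<times> 'd)) list set
     \<Rightarrow> (('a \<times> 'd) \<times> ('c \<times> 'd)) list set" where
  "comp_tr T1 T2 = {zip s1 s2 | s1 s2. length s1 = length s2 \<and>
     (\<exists>s3. length s3 = length s1 \<and> zip s1 s3 \<in> T1 \<and> zip s3 s2 \<in> T2)}"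

end

theory Submission
  imports Defs "HOL-Library.Countable"
begin

instance cmp :: finite
proof
  have "UNIV = {Gt, Eq, Lt}" by (auto intro: cmp.exhaust)
  then show "finite (UNIV :: cmp set)" by (metis finite.emptyI finite.insertI)
qed

definition cmpof :: "'d::linorder \<Rightarrow> 'd \<Rightarrow> cmp" where
  "cmpof x y = (if y < x then Gt else if x = y then Eq else Lt)"

lemma cmp_ok_iff: "cmp_ok c x y \<longleftrightarrow> c = cmpof x y"
  by (cases c) (auto simp: cmpof_def)

fun flipc :: "cmp \<Rightarrow> cmp" where
  "flipc Gt = Lt" | "flipc Eq = Eq" | "flipc Lt = Gt"

lemma cmpof_flip: "cmpof y x = flipc (cmpof x y)"
  by (auto simp: cmpof_def)

lemma cmpof_Eq: "cmpof x y = Eq \<longleftrightarrow> x = y"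
  by (auto simp: cmpof_def)

lemma step_iff:
  "step S (q, R) (\<sigma>, d) (\<gamma>, e) (q', R') \<longleftrightarrow>
   (\<exists>l m u. (q, \<sigma>, l, m, u, \<gamma>, q') \<in> trans S \<and> (\<forall>i < nregs S. l ! i = cmpof d (R ! i))
      \<and> length R' = nregs S \<and> (\<forall>i < nregs S. R' ! i = upd_val (m ! i) (R ! i) d) \<and> e = R' ! u)"
  by (simp add: step_def cmp_ok_iff)

lemma srtA_tr:
  assumes "srtA S" "(q, \<sigma>, l, m, u, \<gamma>, q') \<in> trans S"
  shows "length l = nregs S" "length m = nregs S" "u < nregs S" "set m \<subseteq> {Old, New}"
  using assms by (auto simp: srtA_def wf_srt_def add_free_def)

lemma srtA_m: "srtA S \<Longrightarrow> (q, \<sigma>, l, m, u, \<gamma>, q') \<in> trans S \<Longrightarrow> i < nregs S \<Longrightarrow> m ! i \<noteq> New \<Longrightarrow> m ! i = Old"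
proof -
  assume a: "srtA S" "(q, \<sigma>, l, m, u, \<gamma>, q') \<in> trans S" "i < nregs S" "m ! i \<noteq> New"
  have "m ! i \<in> set m" using srtA_tr(2)[OF a(1,2)] a(3) by simp
  then show ?thesis using srtA_tr(4)[OF a(1,2)] a(4) by auto
qed

lemma run_length: "run S c s t c' \<Longrightarrow> length s = length t"
  by (induction rule: run.induct) auto

lemma zip_inj: "length s = length t \<Longrightarrow> length s' = length t' \<Longrightarrow> zip s t = zip s' t' \<Longrightarrow> s = s' \<and> t = t'"
  by (metis map_fst_zip map_snd_zip)

lemma sem_iff: "length s = length t \<Longrightarrow> zip s t \<in> sem S \<longleftrightarrow> (\<exists>c'. run S (init S, reg0 S) s t c')"
  unfolding sem_def using zip_inj by blast

lemma sem_elem: "w \<in> sem S \<Longrightarrow> \<exists>s t. w = zip s t \<and> length s = length t"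
  unfolding sem_def by blast

definition mk_srt :: "nat \<Rightarrow> nat \<Rightarrow> 'd list \<Rightarrow> (nat \<times> 'a \<times> cmp list \<times> upd list \<times> nat \<times> 'b \<times> nat) set \<Rightarrow> ('a, 'b, 'd) srt" where
  "mk_srt q0 k R0 T = \<lparr>states = insert q0 (fst ` T \<union> (\<lambda>(q, \<sigma>, l, m, u, \<gamma>, q'). q') ` T),
     init = q0, nregs = k, reg0 = R0, trans = T\<rparr>"

lemma mk_srt_simps [simp]: "init (mk_srt q0 k R0 T) = q0" "nregs (mk_srt q0 k R0 T) = k"
  "reg0 (mk_srt q0 k R0 T) = R0" "trans (mk_srt q0 k R0 T) = T"
  by (simp_all add: mk_srt_def)

lemma mk_srt_A:
  assumes "finite T" "length R0 = k"
    "\<And>q \<sigma> l m u \<gamma> q'. (q, \<sigma>, l, m, u, \<gamma>, q') \<in> T \<Longrightarrow> length l = k \<and> length m = k \<and> u < k \<and> set m \<subseteq> {Old, New}"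
  shows "srtA (mk_srt q0 k R0 T)"
  using assms unfolding srtA_def wf_srt_def add_free_def mk_srt_def
  by (fastforce simp: image_iff)


definition PS :: "nat \<Rightarrow> nat \<Rightarrow> nat list set" where
  "PS k K = {P. set P \<subseteq> {..<K} \<and> length P = k}"
definition OS :: "nat \<Rightarrow> cmp list list set" where
  "OS K = {Om. set Om \<subseteq> {r. set r \<subseteq> UNIV \<and> length r = K} \<and> length Om = K}"
definition LS :: "nat \<Rightarrow> cmp list set" where
  "LS K = {l. set l \<subseteq> UNIV \<and> length l = K}"

lemma PS_nth: "P \<in> PS k K \<Longrightarrow> i < k \<Longrightarrow> P ! i < K"
  unfolding PS_def using nth_mem by fastforce

lemma finite_PS: "finite (PS k K)" unfolding PS_def by (rule finite_lists_length_eq) simp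
lemma finite_OS: "finite (OS K)" unfolding OS_def
  by (rule finite_lists_length_eq) (rule finite_lists_length_eq, simp)
lemma finite_LS: "finite (LS K)" unfolding LS_def by (rule finite_lists_length_eq) simp

definition cmps :: "cmp list \<Rightarrow> cmp list list \<Rightarrow> nat option \<Rightarrow> nat \<Rightarrow> cmp" where
  "cmps l Om s p = (case s of None \<Rightarrow> l ! p | Some a \<Rightarrow> Om ! a ! p)"

definition newO :: "nat \<Rightarrow> cmp list \<Rightarrow> cmp list list \<Rightarrow> nat \<Rightarrow> cmp list list" where
  "newO K l Om f = map (\<lambda>a. map (\<lambda>b. if a = f then (if b = f then Eq else l ! b)
      else if b = f then flipc (l ! a) else Om ! a ! b) [0..<K]) [0..<K]"

definition updP :: "upd list \<Rightarrow> nat list \<Rightarrow> nat \<Rightarrow> nat list" where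
  "updP m P v = map (\<lambda>i. if m ! i = New then v else P ! i) [0..<length P]"

definition src2 :: "bool \<Rightarrow> upd list \<Rightarrow> nat \<Rightarrow> nat list \<Rightarrow> nat option" where
  "src2 cm m1 u1 P1 = (if cm \<and> m1 ! u1 \<noteq> New then Some (P1 ! u1) else None)"

definition tgt2 :: "nat \<Rightarrow> nat option \<Rightarrow> nat" where
  "tgt2 f s = (case s of None \<Rightarrow> f | Some a \<Rightarrow> a)"

definition mkm :: "nat \<Rightarrow> nat \<Rightarrow> upd list" where
  "mkm K f = map (\<lambda>a. if a = f then New else Old) [0..<K]"

definition KK :: "('a, 'b, 'd) srt \<Rightarrow> ('e, 'c, 'd) srt \<Rightarrow> nat" where
  "KK S1 S2 = Suc (nregs S1 + nregs S2)"

type_synonym cst = "nat \<times> nat \<times> nat list \<times> nat list \<times> cmp list list"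

definition cout :: "bool \<Rightarrow> nat \<Rightarrow> upd list \<Rightarrow> nat \<Rightarrow> upd list \<Rightarrow> nat \<Rightarrow> nat list \<Rightarrow> nat list \<Rightarrow> nat" where
  "cout cm f m1 u1 m2 u2 P1 P2 = (if cm then updP m2 P2 (tgt2 f (src2 cm m1 u1 P1)) ! u2 else updP m1 P1 f ! u1)"

definition ctrans :: "bool \<Rightarrow> ('a \<Rightarrow> 'b \<Rightarrow> 'e \<Rightarrow> 'c \<Rightarrow> bool) \<Rightarrow> ('b \<Rightarrow> 'c \<Rightarrow> 'z)
   \<Rightarrow> ('a, 'b, 'd) srt \<Rightarrow> ('e, 'c, 'd) srt \<Rightarrow> (nat \<times> 'a \<times> cmp list \<times> upd list \<times> nat \<times> 'z \<times> nat) set" where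
  "ctrans cm ok ol S1 S2 = {(to_nat ((q1, q2, P1, P2, Om) :: cst), \<sigma>, l, mkm (KK S1 S2) f, cout cm f m1 u1 m2 u2 P1 P2, ol \<gamma> \<gamma>2,
      to_nat ((q1', q2', updP m1 P1 f, updP m2 P2 (tgt2 f (src2 cm m1 u1 P1)), newO (KK S1 S2) l Om f) :: cst))
    | q1 \<sigma> l1 m1 u1 \<gamma> q1' q2 \<sigma>2 l2 m2 u2 \<gamma>2 q2' P1 P2 Om l f.
      (q1, \<sigma>, l1, m1, u1, \<gamma>, q1') \<in> trans S1 \<and> (q2, \<sigma>2, l2, m2, u2, \<gamma>2, q2') \<in> trans S2
      \<and> P1 \<in> PS (nregs S1) (KK S1 S2) \<and> P2 \<in> PS (nregs S2) (KK S1 S2) \<and> Om \<in> OS (KK S1 S2)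
      \<and> l \<in> LS (KK S1 S2) \<and> f < KK S1 S2 \<and> f \<notin> set P1 \<and> f \<notin> set P2 \<and> ok \<sigma> \<gamma> \<sigma>2 \<gamma>2
      \<and> (\<forall>i < nregs S1. l1 ! i = l ! (P1 ! i))
      \<and> (\<forall>j < nregs S2. l2 ! j = cmps l Om (src2 cm m1 u1 P1) (P2 ! j))
      \<and> (cm \<or> newO (KK S1 S2) l Om f ! (updP m1 P1 f ! u1) ! (updP m2 P2 (tgt2 f (src2 cm m1 u1 P1)) ! u2) = Eq)}"

lemma ctransE:
  assumes "x \<in> ctrans cm ok ol S1 S2"
  obtains q1 \<sigma> l1 m1 u1 \<gamma> q1' q2 \<sigma>2 l2 m2 u2 \<gamma>2 q2' P1 P2 Om l f where
      "x = (to_nat ((q1, q2, P1, P2, Om) :: cst), \<sigma>, l, mkm (KK S1 S2) f, cout cm f m1 u1 m2 u2 P1 P2, ol \<gamma> \<gamma>2,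
      to_nat ((q1', q2', updP m1 P1 f, updP m2 P2 (tgt2 f (src2 cm m1 u1 P1)), newO (KK S1 S2) l Om f) :: cst))"
      "(q1, \<sigma>, l1, m1, u1, \<gamma>, q1') \<in> trans S1" "(q2, \<sigma>2, l2, m2, u2, \<gamma>2, q2') \<in> trans S2"
      "P1 \<in> PS (nregs S1) (KK S1 S2)" "P2 \<in> PS (nregs S2) (KK S1 S2)" "Om \<in> OS (KK S1 S2)"
      "l \<in> LS (KK S1 S2)" "f < KK S1 S2" "f \<notin> set P1" "f \<notin> set P2" "ok \<sigma> \<gamma> \<sigma>2 \<gamma>2"
      "\<forall>i < nregs S1. l1 ! i = l ! (P1 ! i)"
      "\<forall>j < nregs S2. l2 ! j = cmps l Om (src2 cm m1 u1 P1) (P2 ! j)"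
      "cm \<or> newO (KK S1 S2) l Om f ! (updP m1 P1 f ! u1) ! (updP m2 P2 (tgt2 f (src2 cm m1 u1 P1)) ! u2) = Eq"
  using assms unfolding ctrans_def mem_Collect_eq
  apply (elim exE conjE)
  apply (rule that)
                apply assumption+
  done

definition cgen where
  "cgen cm ol S1 S2 = (\<lambda>((q1, \<sigma>, l1, m1, u1, \<gamma>, q1'), (q2, \<sigma>2, l2, m2, u2, \<gamma>2, q2'), P1, P2, Om, l, f).
     (to_nat ((q1, q2, P1, P2, Om) :: cst), \<sigma>, l, mkm (KK S1 S2) f, cout cm f m1 u1 m2 u2 P1 P2, ol \<gamma> \<gamma>2,
      to_nat ((q1', q2', updP m1 P1 f, updP m2 P2 (tgt2 f (src2 cm m1 u1 P1)), newO (KK S1 S2) l Om f) :: cst)))"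

lemma finite_ctrans:
  assumes "finite (trans S1)" "finite (trans S2)"
  shows "finite (ctrans cm ok ol S1 S2)"
proof (rule finite_subset)
  show "ctrans cm ok ol S1 S2 \<subseteq> cgen cm ol S1 S2 ` (trans S1 \<times> trans S2 \<times> PS (nregs S1) (KK S1 S2)
     \<times> PS (nregs S2) (KK S1 S2) \<times> OS (KK S1 S2) \<times> LS (KK S1 S2) \<times> {..<KK S1 S2})"
  proof
    fix x assume "x \<in> ctrans cm ok ol S1 S2"
    then obtain q1 \<sigma> l1 m1 u1 \<gamma> q1' q2 \<sigma>2 l2 m2 u2 \<gamma>2 q2' P1 P2 Om l f where
      x: "x = (to_nat ((q1, q2, P1, P2, Om) :: cst), \<sigma>, l, mkm (KK S1 S2) f, cout cm f m1 u1 m2 u2 P1 P2, ol \<gamma> \<gamma>2,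
      to_nat ((q1', q2', updP m1 P1 f, updP m2 P2 (tgt2 f (src2 cm m1 u1 P1)), newO (KK S1 S2) l Om f) :: cst))"
      and h: "(q1, \<sigma>, l1, m1, u1, \<gamma>, q1') \<in> trans S1" "(q2, \<sigma>2, l2, m2, u2, \<gamma>2, q2') \<in> trans S2"
      "P1 \<in> PS (nregs S1) (KK S1 S2)" "P2 \<in> PS (nregs S2) (KK S1 S2)" "Om \<in> OS (KK S1 S2)"
      "l \<in> LS (KK S1 S2)" "f < KK S1 S2"
      by (rule ctransE) blast
    show "x \<in> cgen cm ol S1 S2 ` (trans S1 \<times> trans S2 \<times> PS (nregs S1) (KK S1 S2)
     \<times> PS (nregs S2) (KK S1 S2) \<times> OS (KK S1 S2) \<times> LS (KK S1 S2) \<times> {..<KK S1 S2})"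
      by (rule image_eqI[where x = "((q1, \<sigma>, l1, m1, u1, \<gamma>, q1'), (q2, \<sigma>2, l2, m2, u2, \<gamma>2, q2'), P1, P2, Om, l, f)"])
        (use x h in \<open>auto simp: cgen_def\<close>)
  qed
  show "finite (cgen cm ol S1 S2 ` (trans S1 \<times> trans S2 \<times> PS (nregs S1) (KK S1 S2)
     \<times> PS (nregs S2) (KK S1 S2) \<times> OS (KK S1 S2) \<times> LS (KK S1 S2) \<times> {..<KK S1 S2}))"
    using assms finite_PS finite_OS finite_LS by auto
qed

definition C0 :: "('a, 'b, 'd::{linorder,group_add}) srt \<Rightarrow> ('e, 'c, 'd) srt \<Rightarrow> 'd list" where
  "C0 S1 S2 = reg0 S1 @ reg0 S2 @ [0]"

definition O0 :: "nat \<Rightarrow> 'd::linorder list \<Rightarrow> cmp list list" where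
  "O0 K R = map (\<lambda>a. map (\<lambda>b. cmpof (R ! a) (R ! b)) [0..<K]) [0..<K]"

definition Csrt :: "bool \<Rightarrow> ('a \<Rightarrow> 'b \<Rightarrow> 'e \<Rightarrow> 'c \<Rightarrow> bool) \<Rightarrow> ('b \<Rightarrow> 'c \<Rightarrow> 'z)
   \<Rightarrow> ('a, 'b, 'd::{linorder,group_add}) srt \<Rightarrow> ('e, 'c, 'd) srt \<Rightarrow> ('a, 'z, 'd) srt" where
  "Csrt cm ok ol S1 S2 = mk_srt (to_nat ((init S1, init S2, [0..<nregs S1], [nregs S1..<nregs S1 + nregs S2],
      O0 (KK S1 S2) (C0 S1 S2)) :: cst)) (KK S1 S2) (C0 S1 S2) (ctrans cm ok ol S1 S2)"

lemma length_updP [simp]: "length (updP m P v) = length P" by (simp add: updP_def)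
lemma nth_updP: "i < length P \<Longrightarrow> updP m P v ! i = (if m ! i = New then v else P ! i)" by (simp add: updP_def)
lemma length_mkm [simp]: "length (mkm K f) = K" by (simp add: mkm_def)
lemma set_mkm: "set (mkm K f) \<subseteq> {Old, New}" by (auto simp: mkm_def)

lemma Csrt_A:
  assumes "srtA S1" "srtA S2"
  shows "srtA (Csrt cm ok ol S1 S2)"
  unfolding Csrt_def
proof (rule mk_srt_A)
  show "finite (ctrans cm ok ol S1 S2)" using assms finite_ctrans by (auto simp: srtA_def wf_srt_def)
  show "length (C0 S1 S2) = KK S1 S2" using assms by (simp add: C0_def KK_def srtA_def wf_srt_def)
next
  fix q \<sigma> l m u \<gamma> q'
  assume "(q, \<sigma>, l, m, u, \<gamma>, q') \<in> ctrans cm ok ol S1 S2"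
  then obtain q1 \<sigma>' l1 m1 u1 \<gamma> q1' q2 \<sigma>2 l2 m2 u2 \<gamma>2 q2' P1 P2 Om f where
      x: "l \<in> LS (KK S1 S2)" "m = mkm (KK S1 S2) f" "u = cout cm f m1 u1 m2 u2 P1 P2"
      and h: "(q1, \<sigma>', l1, m1, u1, \<gamma>, q1') \<in> trans S1" "(q2, \<sigma>2, l2, m2, u2, \<gamma>2, q2') \<in> trans S2"
      "P1 \<in> PS (nregs S1) (KK S1 S2)" "P2 \<in> PS (nregs S2) (KK S1 S2)" "f < KK S1 S2"
      "f \<notin> set P1" "f \<notin> set P2"
      by (rule ctransE) blast
  have u1: "u1 < length P1" using srtA_tr(3)[OF assms(1) h(1)] h(3) by (simp add: PS_def)
  have u2: "u2 < length P2" using srtA_tr(3)[OF assms(2) h(2)] h(4) by (simp add: PS_def)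
  have "P1 ! u1 < KK S1 S2" using srtA_tr(3)[OF assms(1) h(1)] h(3) by (rule PS_nth[rotated])
  moreover have "P2 ! u2 < KK S1 S2" using srtA_tr(3)[OF assms(2) h(2)] h(4) by (rule PS_nth[rotated])
  moreover have "P1 ! u1 < KK S1 S2 \<Longrightarrow> tgt2 f (src2 cm m1 u1 P1) < KK S1 S2" using h(5)
    by (auto simp: tgt2_def src2_def)
  ultimately have "u < KK S1 S2" using h(5) u1 u2 by (auto simp: x cout_def nth_updP)
  then show "length l = KK S1 S2 \<and> length m = KK S1 S2 \<and> u < KK S1 S2 \<and> set m \<subseteq> {Old, New}"
    using x set_mkm by (auto simp: LS_def)
qed


lemma ctrans_srcE:
  assumes "(to_nat ((q1, q2, P1, P2, Om) :: cst), \<sigma>, l, m, u, z, q') \<in> ctrans cm ok ol S1 S2"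
  obtains l1 m1 u1 \<gamma> q1' \<sigma>2 l2 m2 u2 \<gamma>2 q2' f where
      "m = mkm (KK S1 S2) f" "u = cout cm f m1 u1 m2 u2 P1 P2" "z = ol \<gamma> \<gamma>2"
      "q' = to_nat ((q1', q2', updP m1 P1 f, updP m2 P2 (tgt2 f (src2 cm m1 u1 P1)), newO (KK S1 S2) l Om f) :: cst)"
      "(q1, \<sigma>, l1, m1, u1, \<gamma>, q1') \<in> trans S1" "(q2, \<sigma>2, l2, m2, u2, \<gamma>2, q2') \<in> trans S2"
      "P1 \<in> PS (nregs S1) (KK S1 S2)" "P2 \<in> PS (nregs S2) (KK S1 S2)" "Om \<in> OS (KK S1 S2)"
      "l \<in> LS (KK S1 S2)" "f < KK S1 S2" "f \<notin> set P1" "f \<notin> set P2" "ok \<sigma> \<gamma> \<sigma>2 \<gamma>2"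
      "\<forall>i < nregs S1. l1 ! i = l ! (P1 ! i)"
      "\<forall>j < nregs S2. l2 ! j = cmps l Om (src2 cm m1 u1 P1) (P2 ! j)"
      "cm \<or> newO (KK S1 S2) l Om f ! (updP m1 P1 f ! u1) ! (updP m2 P2 (tgt2 f (src2 cm m1 u1 P1)) ! u2) = Eq"
  using assms
  apply (rule ctransE)
  apply (simp only: prod.inject to_nat_split)
  apply (elim conjE)
  apply hypsubst
  apply (rule that)
                  apply assumption+
  done

definition Inv :: "nat \<Rightarrow> nat list \<Rightarrow> nat list \<Rightarrow> cmp list list \<Rightarrow> 'd::linorder list \<Rightarrow> 'd list \<Rightarrow> 'd list \<Rightarrow> bool" where
  "Inv K P1 P2 Om R R1 R2 \<longleftrightarrow> length R = K \<and> set P1 \<subseteq> {..<K} \<and> set P2 \<subseteq> {..<K} \<and> Om \<in> OS K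
     \<and> (\<forall>a<K. \<forall>b<K. Om ! a ! b = cmpof (R ! a) (R ! b)) \<and> R1 = map ((!) R) P1 \<and> R2 = map ((!) R) P2"

lemma newO_OS: "newO K l Om f \<in> OS K"
  by (auto simp: newO_def OS_def)

lemma cmpof_refl: "cmpof x x = Eq" by (simp add: cmpof_def)

lemma newO_correct:
  assumes "\<forall>a<K. \<forall>b<K. Om ! a ! b = cmpof (R ! a) (R ! b)" "\<forall>a<K. l ! a = cmpof d (R ! a)"
    "\<forall>a<K. R' ! a = (if a = f then d else R ! a)"
  shows "\<forall>a<K. \<forall>b<K. newO K l Om f ! a ! b = cmpof (R' ! a) (R' ! b)"
  using assms by (auto simp: newO_def cmpof_refl cmpof_flip[of "R ! _" d])

lemma updP_PS: "P \<in> PS k K \<Longrightarrow> v < K \<Longrightarrow> updP m P v \<in> PS k K"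
  unfolding PS_def updP_def using nth_mem by fastforce

lemma PS_notin: "P \<in> PS k K \<Longrightarrow> i < k \<Longrightarrow> f \<notin> set P \<Longrightarrow> P ! i \<noteq> f"
  unfolding PS_def using nth_mem by fastforce

lemma csound:
  fixes S1 :: "('a, 'b, 'd::{linorder,group_add}) srt" and S2 :: "('e, 'c, 'd) srt"
  assumes A: "srtA S1" "srtA S2" and I: "Inv (KK S1 S2) P1 P2 Om R R1 R2"
    and L: "length P1 = nregs S1" "length P2 = nregs S2"
    and st: "step (Csrt cm ok ol S1 S2) (to_nat ((q1, q2, P1, P2, Om) :: cst), R) (\<sigma>, d) (z, e) (q', R')"
  shows "\<exists>q1' q2' P1' P2' Om' \<gamma> d' \<sigma>2 \<gamma>2 e2 R1' R2'. q' = to_nat ((q1', q2', P1', P2', Om') :: cst)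
     \<and> step S1 (q1, R1) (\<sigma>, d) (\<gamma>, d') (q1', R1') \<and> step S2 (q2, R2) (\<sigma>2, if cm then d' else d) (\<gamma>2, e2) (q2', R2')
     \<and> ok \<sigma> \<gamma> \<sigma>2 \<gamma>2 \<and> z = ol \<gamma> \<gamma>2 \<and> e = (if cm then e2 else d') \<and> (cm \<or> d' = e2)
     \<and> Inv (KK S1 S2) P1' P2' Om' R' R1' R2' \<and> length P1' = nregs S1 \<and> length P2' = nregs S2"
proof -
  let ?K = "KK S1 S2"
  obtain l m u where tr: "(to_nat ((q1, q2, P1, P2, Om) :: cst), \<sigma>, l, m, u, z, q') \<in> ctrans cm ok ol S1 S2"
    and g: "\<forall>a < ?K. l ! a = cmpof d (R ! a)" and lR': "length R' = ?K"
    and upd: "\<forall>a < ?K. R' ! a = upd_val (m ! a) (R ! a) d" and e: "e = R' ! u"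
    using st unfolding step_iff by (auto simp: Csrt_def)
  from tr obtain l1 m1 u1 \<gamma> q1' \<sigma>2 l2 m2 u2 \<gamma>2 q2' f where
      m: "m = mkm ?K f" and u: "u = cout cm f m1 u1 m2 u2 P1 P2" and z: "z = ol \<gamma> \<gamma>2"
      and q': "q' = to_nat ((q1', q2', updP m1 P1 f, updP m2 P2 (tgt2 f (src2 cm m1 u1 P1)), newO ?K l Om f) :: cst)"
      and t1: "(q1, \<sigma>, l1, m1, u1, \<gamma>, q1') \<in> trans S1" and t2: "(q2, \<sigma>2, l2, m2, u2, \<gamma>2, q2') \<in> trans S2"
      and P1: "P1 \<in> PS (nregs S1) ?K" and P2: "P2 \<in> PS (nregs S2) ?K" and Om: "Om \<in> OS ?K"
      and l: "l \<in> LS ?K" and f: "f < ?K" "f \<notin> set P1" "f \<notin> set P2" and ok: "ok \<sigma> \<gamma> \<sigma>2 \<gamma>2"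
      and g1: "\<forall>i < nregs S1. l1 ! i = l ! (P1 ! i)"
      and g2: "\<forall>j < nregs S2. l2 ! j = cmps l Om (src2 cm m1 u1 P1) (P2 ! j)"
      and oc: "cm \<or> newO ?K l Om f ! (updP m1 P1 f ! u1) ! (updP m2 P2 (tgt2 f (src2 cm m1 u1 P1)) ! u2) = Eq"
    by (rule ctrans_srcE)
  have R'a: "\<forall>a < ?K. R' ! a = (if a = f then d else R ! a)"
    using upd by (auto simp: m mkm_def)
  have IR: "length R = ?K" "\<forall>a<?K. \<forall>b<?K. Om ! a ! b = cmpof (R ! a) (R ! b)"
    "R1 = map ((!) R) P1" "R2 = map ((!) R) P2"
    using I by (auto simp: Inv_def)
  define P1' where "P1' = updP m1 P1 f"
  define s where "s = src2 cm m1 u1 P1"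
  define P2' where "P2' = updP m2 P2 (tgt2 f s)"
  define Om' where "Om' = newO ?K l Om f"
  define R1' where "R1' = map ((!) R') P1'"
  define R2' where "R2' = map ((!) R') P2'"
  define d' where "d' = R1' ! u1"
  define d2 where "d2 = (if cm then d' else d)"
  define e2 where "e2 = R2' ! u2"
  have u1: "u1 < nregs S1" by (rule srtA_tr(3)[OF A(1) t1])
  have u2: "u2 < nregs S2" by (rule srtA_tr(3)[OF A(2) t2])
  have P1i: "\<And>i. i < nregs S1 \<Longrightarrow> P1 ! i < ?K \<and> P1 ! i \<noteq> f"
    using P1 f PS_nth PS_notin by blast
  have P2i: "\<And>i. i < nregs S2 \<Longrightarrow> P2 ! i < ?K \<and> P2 ! i \<noteq> f"
    using P2 f PS_nth PS_notin by blast
  have R1'i: "\<And>i. i < nregs S1 \<Longrightarrow> R1' ! i = upd_val (m1 ! i) (R1 ! i) d"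
  proof -
    fix i assume i: "i < nregs S1"
    show "R1' ! i = upd_val (m1 ! i) (R1 ! i) d"
    proof (cases "m1 ! i = New")
      case True
      then show ?thesis using i L f R'a by (simp add: R1'_def P1'_def nth_updP)
    next
      case False
      then have "m1 ! i = Old" using srtA_m[OF A(1) t1 i] by simp
      then show ?thesis using i L f R'a P1i[OF i] IR by (simp add: R1'_def P1'_def nth_updP)
    qed
  qed
  have s1: "step S1 (q1, R1) (\<sigma>, d) (\<gamma>, d') (q1', R1')"
    unfolding step_iff
  proof (intro exI conjI)
    show "(q1, \<sigma>, l1, m1, u1, \<gamma>, q1') \<in> trans S1" by (rule t1)
    show "\<forall>i<nregs S1. l1 ! i = cmpof d (R1 ! i)" using g1 g P1i IR L by simp
    show "length R1' = nregs S1" using L by (simp add: R1'_def P1'_def)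
    show "\<forall>i<nregs S1. R1' ! i = upd_val (m1 ! i) (R1 ! i) d" using R1'i by blast
  qed (simp add: d'_def)
  have d2v: "s = None \<Longrightarrow> d2 = d"
    and sv: "\<And>a. s = Some a \<Longrightarrow> a = P1 ! u1 \<and> d2 = R ! a"
  proof -
    have "d' = upd_val (m1 ! u1) (R1 ! u1) d" using R1'i u1 by (simp add: d'_def)
    moreover have "m1 ! u1 \<noteq> New \<Longrightarrow> m1 ! u1 = Old" using srtA_m[OF A(1) t1 u1] by simp
    ultimately have "d' = (if m1 ! u1 = New then d else R ! (P1 ! u1))"
      using IR L u1 by auto
    then show "s = None \<Longrightarrow> d2 = d"
      "\<And>a. s = Some a \<Longrightarrow> a = P1 ! u1 \<and> d2 = R ! a"
      by (auto simp: s_def src2_def d2_def)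
  qed
  have ga: "\<And>a. s = Some a \<Longrightarrow> a < ?K \<and> a \<noteq> f" using sv P1i u1 by blast
  have R2'i: "\<And>j. j < nregs S2 \<Longrightarrow> R2' ! j = upd_val (m2 ! j) (R2 ! j) d2"
  proof -
    fix j assume j: "j < nregs S2"
    show "R2' ! j = upd_val (m2 ! j) (R2 ! j) d2"
    proof (cases "m2 ! j = New")
      case True
      then show ?thesis using j L f R'a d2v sv ga
        by (cases s) (auto simp: R2'_def P2'_def nth_updP tgt2_def)
    next
      case False
      then have "m2 ! j = Old" using srtA_m[OF A(2) t2 j] by simp
      then show ?thesis using j L f R'a P2i[OF j] IR by (simp add: R2'_def P2'_def nth_updP)
    qed
  qed
  have s2: "step S2 (q2, R2) (\<sigma>2, d2) (\<gamma>2, e2) (q2', R2')"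
    unfolding step_iff
  proof (intro exI conjI)
    show "(q2, \<sigma>2, l2, m2, u2, \<gamma>2, q2') \<in> trans S2" by (rule t2)
    show "\<forall>j<nregs S2. l2 ! j = cmpof d2 (R2 ! j)"
    proof (intro allI impI)
      fix j assume j: "j < nregs S2"
      show "l2 ! j = cmpof d2 (R2 ! j)"
      proof (cases s)
        case None
        then show ?thesis using g2 j g P2i[OF j] IR L d2v by (simp add: s_def cmps_def)
      next
        case (Some a)
        then show ?thesis using g2 j IR P2i[OF j] L sv ga by (simp add: s_def cmps_def)
      qed
    qed
    show "length R2' = nregs S2" using L by (simp add: R2'_def P2'_def)
    show "\<forall>j<nregs S2. R2' ! j = upd_val (m2 ! j) (R2 ! j) d2" using R2'i by blast
  qed (simp add: e2_def)
  have O'c: "\<forall>a<?K. \<forall>b<?K. Om' ! a ! b = cmpof (R' ! a) (R' ! b)"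
    unfolding Om'_def by (rule newO_correct[OF IR(2) g R'a])
  have tK: "tgt2 f s < ?K" using f ga by (cases s) (auto simp: tgt2_def)
  have P1'K: "P1' \<in> PS (nregs S1) ?K" unfolding P1'_def by (rule updP_PS[OF P1 f(1)])
  have P2'K: "P2' \<in> PS (nregs S2) ?K" unfolding P2'_def by (rule updP_PS[OF P2 tK])
  have P1'u: "P1' ! u1 < ?K" using P1'K u1 PS_nth by blast
  have P2'u: "P2' ! u2 < ?K" using P2'K u2 PS_nth by blast
  have d'e: "d' = R' ! (P1' ! u1)" "e2 = R' ! (P2' ! u2)"
    using u1 u2 L by (simp_all add: d'_def e2_def R1'_def R2'_def P1'_def P2'_def)
  have eq: "cm \<or> d' = e2"
    using oc O'c P1'u P2'u d'e by (auto simp: Om'_def P1'_def P2'_def s_def cmpof_Eq)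
  have ee: "e = (if cm then e2 else d')"
    using d'e by (simp add: e u cout_def P1'_def P2'_def s_def)
  have inv': "Inv ?K P1' P2' Om' R' R1' R2'"
    unfolding Inv_def using lR' P1'K P2'K O'c by (auto simp: PS_def Om'_def newO_OS R1'_def R2'_def)
  show ?thesis
    apply (rule exI[of _ q1'], rule exI[of _ q2'], rule exI[of _ P1'], rule exI[of _ P2'], rule exI[of _ Om'])
    apply (rule exI[of _ \<gamma>], rule exI[of _ d'], rule exI[of _ \<sigma>2], rule exI[of _ \<gamma>2], rule exI[of _ e2])
    apply (rule exI[of _ R1'], rule exI[of _ R2'])
    using q' s1 s2 ok z ee eq inv' P1'K P2'K
    by (simp add: P1'_def P2'_def Om'_def s_def d2_def PS_def)
qed

lemma ctransI:
  assumes "(q1, \<sigma>, l1, m1, u1, \<gamma>, q1') \<in> trans S1" "(q2, \<sigma>2, l2, m2, u2, \<gamma>2, q2') \<in> trans S2"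
      "P1 \<in> PS (nregs S1) (KK S1 S2)" "P2 \<in> PS (nregs S2) (KK S1 S2)" "Om \<in> OS (KK S1 S2)"
      "l \<in> LS (KK S1 S2)" "f < KK S1 S2" "f \<notin> set P1" "f \<notin> set P2" "ok \<sigma> \<gamma> \<sigma>2 \<gamma>2"
      "\<forall>i < nregs S1. l1 ! i = l ! (P1 ! i)"
      "\<forall>j < nregs S2. l2 ! j = cmps l Om (src2 cm m1 u1 P1) (P2 ! j)"
      "cm \<or> newO (KK S1 S2) l Om f ! (updP m1 P1 f ! u1) ! (updP m2 P2 (tgt2 f (src2 cm m1 u1 P1)) ! u2) = Eq"
  shows "(to_nat ((q1, q2, P1, P2, Om) :: cst), \<sigma>, l, mkm (KK S1 S2) f, cout cm f m1 u1 m2 u2 P1 P2, ol \<gamma> \<gamma>2,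
      to_nat ((q1', q2', updP m1 P1 f, updP m2 P2 (tgt2 f (src2 cm m1 u1 P1)), newO (KK S1 S2) l Om f) :: cst))
     \<in> ctrans cm ok ol S1 S2"
  unfolding ctrans_def mem_Collect_eq
  apply (rule exI)+
  apply (rule conjI, rule refl)
  using assms by blast

lemma free_reg:
  assumes "length P1 = k1" "length P2 = k2"
  obtains f where "f < Suc (k1 + k2)" "f \<notin> set P1" "f \<notin> set P2"
proof -
  have "\<not> {..<Suc (k1 + k2)} \<subseteq> set P1 \<union> set P2"
  proof
    assume "{..<Suc (k1 + k2)} \<subseteq> set P1 \<union> set P2"
    then have "card {..<Suc (k1 + k2)} \<le> card (set P1 \<union> set P2)" by (intro card_mono) auto
    also have "\<dots> \<le> card (set P1) + card (set P2)" by (rule card_Un_le)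
    also have "\<dots> \<le> k1 + k2" using card_length[of P1] card_length[of P2] assms by simp
    finally show False by simp
  qed
  then show ?thesis using that by auto
qed

lemma ccomplete:
  fixes S1 :: "('a, 'b, 'd::{linorder,group_add}) srt" and S2 :: "('e, 'c, 'd) srt"
  assumes A: "srtA S1" "srtA S2" and I: "Inv (KK S1 S2) P1 P2 Om R R1 R2"
    and L: "length P1 = nregs S1" "length P2 = nregs S2"
    and st1: "step S1 (q1, R1) (\<sigma>, d) (\<gamma>, d') (q1', R1')"
    and st2: "step S2 (q2, R2) (\<sigma>2, if cm then d' else d) (\<gamma>2, e2) (q2', R2')"
    and ok: "ok \<sigma> \<gamma> \<sigma>2 \<gamma>2" and eq: "cm \<or> d' = e2"
  shows "\<exists>P1' P2' Om' R'. step (Csrt cm ok ol S1 S2) (to_nat ((q1, q2, P1, P2, Om) :: cst), R) (\<sigma>, d)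
       (ol \<gamma> \<gamma>2, if cm then e2 else d') (to_nat ((q1', q2', P1', P2', Om') :: cst), R')
     \<and> Inv (KK S1 S2) P1' P2' Om' R' R1' R2' \<and> length P1' = nregs S1 \<and> length P2' = nregs S2"
proof -
  let ?K = "KK S1 S2"
  define d2 where "d2 = (if cm then d' else d)"
  obtain l1 m1 u1 where t1: "(q1, \<sigma>, l1, m1, u1, \<gamma>, q1') \<in> trans S1"
    and g1: "\<forall>i < nregs S1. l1 ! i = cmpof d (R1 ! i)" and lR1': "length R1' = nregs S1"
    and up1: "\<forall>i < nregs S1. R1' ! i = upd_val (m1 ! i) (R1 ! i) d" and d': "d' = R1' ! u1"
    using st1 unfolding step_iff by blast
  obtain l2 m2 u2 where t2: "(q2, \<sigma>2, l2, m2, u2, \<gamma>2, q2') \<in> trans S2"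
    and g2: "\<forall>i < nregs S2. l2 ! i = cmpof d2 (R2 ! i)" and lR2': "length R2' = nregs S2"
    and up2: "\<forall>i < nregs S2. R2' ! i = upd_val (m2 ! i) (R2 ! i) d2" and e2: "e2 = R2' ! u2"
    using st2 unfolding step_iff d2_def by blast
  have IR: "length R = ?K" "\<forall>a<?K. \<forall>b<?K. Om ! a ! b = cmpof (R ! a) (R ! b)"
    "R1 = map ((!) R) P1" "R2 = map ((!) R) P2" "Om \<in> OS ?K"
    and P1: "P1 \<in> PS (nregs S1) ?K" and P2: "P2 \<in> PS (nregs S2) ?K"
    using I L by (auto simp: Inv_def PS_def)
  obtain f where f: "f < ?K" "f \<notin> set P1" "f \<notin> set P2"
    using free_reg[OF L] unfolding KK_def by blast
  define l where "l = map (\<lambda>a. cmpof d (R ! a)) [0..<?K]"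
  define R' where "R' = map (\<lambda>a. if a = f then d else R ! a) [0..<?K]"
  define P1' where "P1' = updP m1 P1 f"
  define s where "s = src2 cm m1 u1 P1"
  define P2' where "P2' = updP m2 P2 (tgt2 f s)"
  define Om' where "Om' = newO ?K l Om f"
  have g: "\<forall>a < ?K. l ! a = cmpof d (R ! a)" by (simp add: l_def)
  have R'a: "\<forall>a < ?K. R' ! a = (if a = f then d else R ! a)" by (simp add: R'_def)
  have u1: "u1 < nregs S1" by (rule srtA_tr(3)[OF A(1) t1])
  have u2: "u2 < nregs S2" by (rule srtA_tr(3)[OF A(2) t2])
  have P1i: "\<And>i. i < nregs S1 \<Longrightarrow> P1 ! i < ?K \<and> P1 ! i \<noteq> f"
    using P1 f PS_nth PS_notin by blast
  have P2i: "\<And>i. i < nregs S2 \<Longrightarrow> P2 ! i < ?K \<and> P2 ! i \<noteq> f"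
    using P2 f PS_nth PS_notin by blast
  have R1'i: "\<And>i. i < nregs S1 \<Longrightarrow> R1' ! i = R' ! (P1' ! i)"
  proof -
    fix i assume i: "i < nregs S1"
    show "R1' ! i = R' ! (P1' ! i)"
    proof (cases "m1 ! i = New")
      case True
      then show ?thesis using i L f R'a up1 by (simp add: P1'_def nth_updP)
    next
      case False
      then have "m1 ! i = Old" using srtA_m[OF A(1) t1 i] by simp
      then show ?thesis using i L f R'a P1i[OF i] IR up1 by (simp add: P1'_def nth_updP)
    qed
  qed
  have d2v: "s = None \<Longrightarrow> d2 = d" and sv: "\<And>a. s = Some a \<Longrightarrow> a = P1 ! u1 \<and> d2 = R ! a"
  proof -
    have "d' = upd_val (m1 ! u1) (R1 ! u1) d" using up1 u1 d' by simp
    moreover have "m1 ! u1 \<noteq> New \<Longrightarrow> m1 ! u1 = Old" using srtA_m[OF A(1) t1 u1] by simp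
    ultimately have "d' = (if m1 ! u1 = New then d else R ! (P1 ! u1))"
      using IR L u1 by auto
    then show "s = None \<Longrightarrow> d2 = d" "\<And>a. s = Some a \<Longrightarrow> a = P1 ! u1 \<and> d2 = R ! a"
      by (auto simp: s_def src2_def d2_def)
  qed
  have ga: "\<And>a. s = Some a \<Longrightarrow> a < ?K \<and> a \<noteq> f" using sv P1i u1 by blast
  have R2'i: "\<And>j. j < nregs S2 \<Longrightarrow> R2' ! j = R' ! (P2' ! j)"
  proof -
    fix j assume j: "j < nregs S2"
    show "R2' ! j = R' ! (P2' ! j)"
    proof (cases "m2 ! j = New")
      case True
      then show ?thesis using j L f R'a d2v sv ga up2
        by (cases s) (auto simp: P2'_def nth_updP tgt2_def)
    next
      case False
      then have "m2 ! j = Old" using srtA_m[OF A(2) t2 j] by simp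
      then show ?thesis using j L f R'a P2i[OF j] IR up2 by (simp add: P2'_def nth_updP)
    qed
  qed
  have gg2: "\<forall>j < nregs S2. l2 ! j = cmps l Om s (P2 ! j)"
  proof (intro allI impI)
    fix j assume j: "j < nregs S2"
    show "l2 ! j = cmps l Om s (P2 ! j)"
    proof (cases s)
      case None
      then show ?thesis using g2 j g P2i[OF j] IR L d2v by (simp add: cmps_def)
    next
      case (Some a)
      then show ?thesis using g2 j IR P2i[OF j] L sv ga by (simp add: cmps_def)
    qed
  qed
  have O'c: "\<forall>a<?K. \<forall>b<?K. Om' ! a ! b = cmpof (R' ! a) (R' ! b)"
    unfolding Om'_def by (rule newO_correct[OF IR(2) g R'a])
  have tK: "tgt2 f s < ?K" using f ga by (cases s) (auto simp: tgt2_def)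
  have P1'K: "P1' \<in> PS (nregs S1) ?K" unfolding P1'_def by (rule updP_PS[OF P1 f(1)])
  have P2'K: "P2' \<in> PS (nregs S2) ?K" unfolding P2'_def by (rule updP_PS[OF P2 tK])
  have P1'u: "P1' ! u1 < ?K" using P1'K u1 PS_nth by blast
  have P2'u: "P2' ! u2 < ?K" using P2'K u2 PS_nth by blast
  have d'e: "d' = R' ! (P1' ! u1)" "e2 = R' ! (P2' ! u2)"
    using u1 u2 R1'i R2'i d' e2 by simp_all
  have oc: "cm \<or> Om' ! (P1' ! u1) ! (P2' ! u2) = Eq"
    using eq O'c P1'u P2'u d'e by (auto simp: cmpof_Eq)
  have tr: "(to_nat ((q1, q2, P1, P2, Om) :: cst), \<sigma>, l, mkm ?K f, cout cm f m1 u1 m2 u2 P1 P2, ol \<gamma> \<gamma>2,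
      to_nat ((q1', q2', P1', P2', Om') :: cst)) \<in> ctrans cm ok ol S1 S2"
    unfolding P1'_def P2'_def Om'_def s_def
    apply (rule ctransI)
                apply (rule t1)
               apply (rule t2)
              apply (rule P1)
             apply (rule P2)
            apply (rule IR(5))
           apply (simp add: l_def LS_def)
          apply (rule f(1))
         apply (rule f(2))
        apply (rule f(3))
       apply (rule ok)
    using g1 P1i IR L gg2 oc by (auto simp: l_def s_def P1'_def P2'_def Om'_def)
  have stC: "step (Csrt cm ok ol S1 S2) (to_nat ((q1, q2, P1, P2, Om) :: cst), R) (\<sigma>, d)
       (ol \<gamma> \<gamma>2, if cm then e2 else d') (to_nat ((q1', q2', P1', P2', Om') :: cst), R')"
    unfolding step_iff
    apply (rule exI[of _ l], rule exI[of _ "mkm ?K f"], rule exI[of _ "cout cm f m1 u1 m2 u2 P1 P2"])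
    using tr g R'a d'e by (auto simp: Csrt_def R'_def mkm_def cout_def P1'_def P2'_def s_def)
  have inv': "Inv ?K P1' P2' Om' R' R1' R2'"
    unfolding Inv_def using P1'K P2'K O'c R1'i R2'i lR1' lR2'
    by (auto simp: PS_def Om'_def newO_OS R'_def intro!: nth_equalityI)
  show ?thesis
    apply (rule exI[of _ P1'], rule exI[of _ P2'], rule exI[of _ Om'], rule exI[of _ R'])
    using stC inv' P1'K P2'K by (simp add: PS_def)
qed


inductive GL :: "bool \<Rightarrow> ('a \<Rightarrow> 'b \<Rightarrow> 'e \<Rightarrow> 'c \<Rightarrow> bool) \<Rightarrow> ('b \<Rightarrow> 'c \<Rightarrow> 'z) \<Rightarrow> ('a \<times> 'd) list \<Rightarrow> ('b \<times> 'd) list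
   \<Rightarrow> ('e \<times> 'd) list \<Rightarrow> ('c \<times> 'd) list \<Rightarrow> ('z \<times> 'd) list \<Rightarrow> bool" for cm ok ol where
  GL_nil: "GL cm ok ol [] [] [] [] []"
| GL_cons: "ok \<sigma> \<gamma> \<sigma>2 \<gamma>2 \<Longrightarrow> cm \<or> d' = e2 \<Longrightarrow> GL cm ok ol xs ys1 xs2 ys2 ys \<Longrightarrow>
    GL cm ok ol ((\<sigma>, d) # xs) ((\<gamma>, d') # ys1) ((\<sigma>2, if cm then d' else d) # xs2) ((\<gamma>2, e2) # ys2)
      ((ol \<gamma> \<gamma>2, if cm then e2 else d') # ys)"

inductive_cases run_consE: "run S c (x # xs) ys c'"
inductive_cases run_nilE: "run S c [] ys c'"

lemma run_sound:
  fixes S1 :: "('a, 'b, 'd::{linorder,group_add}) srt" and S2 :: "('e, 'c, 'd) srt"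
  assumes A: "srtA S1" "srtA S2"
  shows "run (Csrt cm ok ol S1 S2) c s t c' \<Longrightarrow> c = (to_nat ((q1, q2, P1, P2, Om) :: cst), R) \<Longrightarrow>
    Inv (KK S1 S2) P1 P2 Om R R1 R2 \<Longrightarrow> length P1 = nregs S1 \<Longrightarrow> length P2 = nregs S2 \<Longrightarrow>
    \<exists>t1 s2 t2 c1' c2'. run S1 (q1, R1) s t1 c1' \<and> run S2 (q2, R2) s2 t2 c2' \<and> GL cm ok ol s t1 s2 t2 t"
proof (induction arbitrary: q1 q2 P1 P2 Om R R1 R2 rule: run.induct)
  case (run_nil c)
  then show ?case by (meson GL_nil run.run_nil)
next
  case (run_cons c x y c'' xs ys c')
  obtain \<sigma> d where x: "x = (\<sigma>, d)" by fastforce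
  obtain z e where y: "y = (z, e)" by fastforce
  obtain q'' R'' where c'': "c'' = (q'', R'')" by fastforce
  from csound[OF A run_cons.prems(2,3,4) run_cons.hyps(1)[unfolded run_cons.prems(1) x y c'']]
  obtain q1' q2' P1' P2' Om' \<gamma> d' \<sigma>2 \<gamma>2 e2 R1' R2' where
    h: "q'' = to_nat ((q1', q2', P1', P2', Om') :: cst)"
     "step S1 (q1, R1) (\<sigma>, d) (\<gamma>, d') (q1', R1')" "step S2 (q2, R2) (\<sigma>2, if cm then d' else d) (\<gamma>2, e2) (q2', R2')"
     "ok \<sigma> \<gamma> \<sigma>2 \<gamma>2" "z = ol \<gamma> \<gamma>2" "e = (if cm then e2 else d')" "cm \<or> d' = e2"
     "Inv (KK S1 S2) P1' P2' Om' R'' R1' R2'" "length P1' = nregs S1" "length P2' = nregs S2"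
    by blast
  from run_cons.IH[OF _ h(8-10)] c'' h(1)
  obtain t1 s2 t2 c1' c2' where r: "run S1 (q1', R1') xs t1 c1'" "run S2 (q2', R2') s2 t2 c2'"
    "GL cm ok ol xs t1 s2 t2 ys" by blast
  show ?case
    apply (rule exI[of _ "(\<gamma>, d') # t1"], rule exI[of _ "(\<sigma>2, if cm then d' else d) # s2"],
        rule exI[of _ "(\<gamma>2, e2) # t2"], rule exI[of _ c1'], rule exI[of _ c2'])
    using run.run_cons[OF h(2) r(1)] run.run_cons[OF h(3) r(2)] GL_cons[OF h(4) h(7) r(3)] x y h(5,6)
    by simp
qed

lemma run_complete:
  fixes S1 :: "('a, 'b, 'd::{linorder,group_add}) srt" and S2 :: "('e, 'c, 'd) srt"
  assumes A: "srtA S1" "srtA S2"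
  shows "GL cm ok ol s t1 s2 t2 t \<Longrightarrow> run S1 (q1, R1) s t1 c1' \<Longrightarrow> run S2 (q2, R2) s2 t2 c2' \<Longrightarrow>
    Inv (KK S1 S2) P1 P2 Om R R1 R2 \<Longrightarrow> length P1 = nregs S1 \<Longrightarrow> length P2 = nregs S2 \<Longrightarrow>
    \<exists>c'. run (Csrt cm ok ol S1 S2) (to_nat ((q1, q2, P1, P2, Om) :: cst), R) s t c'"
proof (induction arbitrary: q1 q2 P1 P2 Om R R1 R2 rule: GL.induct)
  case GL_nil
  then show ?case by (meson run.run_nil)
next
  case (GL_cons \<sigma> \<gamma> \<sigma>2 \<gamma>2 d' e2 xs ys1 xs2 ys2 ys d)
  from GL_cons.prems(1) obtain c1 where r1: "step S1 (q1, R1) (\<sigma>, d) (\<gamma>, d') c1" "run S1 c1 xs ys1 c1'"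
    by (auto elim: run_consE)
  from GL_cons.prems(2) obtain c2 where r2: "step S2 (q2, R2) (\<sigma>2, if cm then d' else d) (\<gamma>2, e2) c2" "run S2 c2 xs2 ys2 c2'"
    by (auto elim: run_consE)
  obtain q1' R1' where c1: "c1 = (q1', R1')" by fastforce
  obtain q2' R2' where c2: "c2 = (q2', R2')" by fastforce
  from ccomplete[where ok=ok and cm=cm and ol=ol, OF A GL_cons.prems(3,4,5) r1(1)[unfolded c1] r2(1)[unfolded c2] GL_cons.hyps(1,2)]
  obtain P1' P2' Om' R' where h: "step (Csrt cm ok ol S1 S2) (to_nat ((q1, q2, P1, P2, Om) :: cst), R) (\<sigma>, d)
       (ol \<gamma> \<gamma>2, if cm then e2 else d') (to_nat ((q1', q2', P1', P2', Om') :: cst), R')"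
     "Inv (KK S1 S2) P1' P2' Om' R' R1' R2'" "length P1' = nregs S1" "length P2' = nregs S2"
    by blast
  from GL_cons.IH[OF r1(2)[unfolded c1] r2(2)[unfolded c2] h(2-4)]
  obtain c' where "run (Csrt cm ok ol S1 S2) (to_nat ((q1', q2', P1', P2', Om') :: cst), R') xs ys c'" by blast
  then show ?case using run.run_cons[OF h(1)] by blast
qed

lemma O0_nth: "\<forall>a<K. \<forall>b<K. O0 K R ! a ! b = cmpof (R ! a) (R ! b)"
  by (simp add: O0_def)
lemma O0_OS: "O0 K R \<in> OS K"
  by (auto simp: O0_def OS_def)

lemma Inv0:
  fixes S1 :: "('a, 'b, 'd::{linorder,group_add}) srt" and S2 :: "('e, 'c, 'd) srt"
  assumes A: "srtA S1" "srtA S2"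
  shows "Inv (KK S1 S2) [0..<nregs S1] [nregs S1..<nregs S1 + nregs S2] (O0 (KK S1 S2) (C0 S1 S2)) (C0 S1 S2) (reg0 S1) (reg0 S2)"
proof -
  have l: "length (reg0 S1) = nregs S1" "length (reg0 S2) = nregs S2"
    using A by (auto simp: srtA_def wf_srt_def)
  show ?thesis unfolding Inv_def
  proof (intro conjI)
    show "reg0 S1 = map ((!) (C0 S1 S2)) [0..<nregs S1]"
      using l by (intro nth_equalityI) (auto simp: C0_def nth_append)
    show "reg0 S2 = map ((!) (C0 S1 S2)) [nregs S1..<nregs S1 + nregs S2]"
      using l by (intro nth_equalityI) (auto simp: C0_def nth_append)
    show "length (C0 S1 S2) = KK S1 S2" using l by (simp add: C0_def KK_def)
  qed (use l O0_nth O0_OS in \<open>auto simp: KK_def\<close>)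
qed

lemma Csem:
  fixes S1 :: "('a, 'b, 'd::{linorder,group_add}) srt" and S2 :: "('e, 'c, 'd) srt"
  assumes A: "srtA S1" "srtA S2"
  shows "(\<exists>c'. run (Csrt cm ok ol S1 S2) (init (Csrt cm ok ol S1 S2), reg0 (Csrt cm ok ol S1 S2)) s t c') \<longleftrightarrow>
    (\<exists>t1 s2 t2 c1' c2'. run S1 (init S1, reg0 S1) s t1 c1' \<and> run S2 (init S2, reg0 S2) s2 t2 c2' \<and> GL cm ok ol s t1 s2 t2 t)"
proof -
  have L: "length [0..<nregs S1] = nregs S1" "length [nregs S1..<nregs S1 + nregs S2] = nregs S2" by simp_all
  have i: "init (Csrt cm ok ol S1 S2) = to_nat ((init S1, init S2, [0..<nregs S1], [nregs S1..<nregs S1 + nregs S2],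
      O0 (KK S1 S2) (C0 S1 S2)) :: cst)" "reg0 (Csrt cm ok ol S1 S2) = C0 S1 S2"
    by (simp_all add: Csrt_def)
  show ?thesis
  proof
    assume "\<exists>c'. run (Csrt cm ok ol S1 S2) (init (Csrt cm ok ol S1 S2), reg0 (Csrt cm ok ol S1 S2)) s t c'"
    then obtain c' where "run (Csrt cm ok ol S1 S2) (init (Csrt cm ok ol S1 S2), reg0 (Csrt cm ok ol S1 S2)) s t c'" by blast
    from run_sound[OF A this[unfolded i] refl Inv0[OF A] L] show "\<exists>t1 s2 t2 c1' c2'. run S1 (init S1, reg0 S1) s t1 c1' \<and> run S2 (init S2, reg0 S2) s2 t2 c2' \<and> GL cm ok ol s t1 s2 t2 t" .
  next
    assume "\<exists>t1 s2 t2 c1' c2'. run S1 (init S1, reg0 S1) s t1 c1' \<and> run S2 (init S2, reg0 S2) s2 t2 c2' \<and> GL cm ok ol s t1 s2 t2 t"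
    then obtain t1 s2 t2 c1' c2' where h: "run S1 (init S1, reg0 S1) s t1 c1'" "run S2 (init S2, reg0 S2) s2 t2 c2'" "GL cm ok ol s t1 s2 t2 t" by blast
    from run_complete[OF A h(3) h(1) h(2) Inv0[OF A] L]
    show "\<exists>c'. run (Csrt cm ok ol S1 S2) (init (Csrt cm ok ol S1 S2), reg0 (Csrt cm ok ol S1 S2)) s t c'"
      unfolding i .
  qed
qed


definition en :: "nat \<Rightarrow> nat \<Rightarrow> nat" where "en b q = to_nat (b, q)"
lemma en_inj [simp]: "en b q = en b' q' \<longleftrightarrow> b = b' \<and> q = q'" by (simp add: en_def)

definition B1 :: "('a, 'b, 'd) srt \<Rightarrow> ('a, 'b, 'd) srt \<Rightarrow> (nat \<times> 'a \<times> cmp list \<times> upd list \<times> nat \<times> 'b \<times> nat) set" where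
  "B1 S1 S2 = {(en 0 q, \<sigma>, l1 @ L, m1 @ replicate (nregs S2) Old, u1, \<gamma>, en 0 q') | q \<sigma> l1 m1 u1 \<gamma> q' L.
     (q, \<sigma>, l1, m1, u1, \<gamma>, q') \<in> trans S1 \<and> L \<in> LS (nregs S2)}"
definition B2 :: "('a, 'b, 'd) srt \<Rightarrow> ('a, 'b, 'd) srt \<Rightarrow> (nat \<times> 'a \<times> cmp list \<times> upd list \<times> nat \<times> 'b \<times> nat) set" where
  "B2 S1 S2 = {(en 1 q, \<sigma>, L @ l2, replicate (nregs S1) Old @ m2, nregs S1 + u2, \<gamma>, en 1 q') | q \<sigma> l2 m2 u2 \<gamma> q' L.
     (q, \<sigma>, l2, m2, u2, \<gamma>, q') \<in> trans S2 \<and> L \<in> LS (nregs S1)}"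
definition BX :: "('a, 'b, 'd) srt \<Rightarrow> ('a, 'b, 'd) srt \<Rightarrow> (nat \<times> 'a \<times> cmp list \<times> upd list \<times> nat \<times> 'b \<times> nat) set" where
  "BX S1 S2 = Pair (en 2 0) ` {r. (en 0 (init S1), r) \<in> B1 S1 S2 \<or> (en 1 (init S2), r) \<in> B2 S1 S2}"

definition Usrt :: "('a, 'b, 'd::{linorder,group_add}) srt \<Rightarrow> ('a, 'b, 'd) srt \<Rightarrow> ('a, 'b, 'd) srt" where
  "Usrt S1 S2 = mk_srt (en 2 0) (nregs S1 + nregs S2) (reg0 S1 @ reg0 S2) (B1 S1 S2 \<union> B2 S1 S2 \<union> BX S1 S2)"

lemma B1_mem: "(en b q, \<sigma>, l, m, u, \<gamma>, q'') \<in> B1 S1 S2 \<longleftrightarrow> b = 0 \<and> (\<exists>l1 m1 q' L. l = l1 @ L \<and> m = m1 @ replicate (nregs S2) Old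
   \<and> q'' = en 0 q' \<and> (q, \<sigma>, l1, m1, u, \<gamma>, q') \<in> trans S1 \<and> L \<in> LS (nregs S2))"
  unfolding B1_def by auto
lemma B2_mem: "(en b q, \<sigma>, l, m, u, \<gamma>, q'') \<in> B2 S1 S2 \<longleftrightarrow> b = 1 \<and> (\<exists>l2 m2 u2 q' L. l = L @ l2 \<and> m = replicate (nregs S1) Old @ m2
   \<and> u = nregs S1 + u2 \<and> q'' = en 1 q' \<and> (q, \<sigma>, l2, m2, u2, \<gamma>, q') \<in> trans S2 \<and> L \<in> LS (nregs S1))"
  unfolding B2_def by auto
lemma BX_mem: "(en b q, r) \<in> BX S1 S2 \<longleftrightarrow> b = 2 \<and> q = 0 \<and> ((en 0 (init S1), r) \<in> B1 S1 S2 \<or> (en 1 (init S2), r) \<in> B2 S1 S2)"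
  unfolding BX_def by auto

lemma Usrt_A:
  assumes A: "srtA S1" "srtA S2"
  shows "srtA (Usrt S1 S2)"
  unfolding Usrt_def
proof (rule mk_srt_A)
  have f1: "finite (trans S1)" "finite (trans S2)" using A by (auto simp: srtA_def wf_srt_def)
  have "B1 S1 S2 \<subseteq> (\<lambda>((q, \<sigma>, l1, m1, u1, \<gamma>, q'), L). (en 0 q, \<sigma>, l1 @ L, m1 @ replicate (nregs S2) Old, u1, \<gamma>, en 0 q'))
     ` (trans S1 \<times> LS (nregs S2))"
    unfolding B1_def by (auto simp: image_iff) (rule bexI[rotated], assumption, rule bexI[rotated], assumption, simp)
  then have fB1: "finite (B1 S1 S2)" using f1 finite_LS by (meson finite_SigmaI finite_imageI finite_subset)
  have "B2 S1 S2 \<subseteq> (\<lambda>((q, \<sigma>, l2, m2, u2, \<gamma>, q'), L). (en 1 q, \<sigma>, L @ l2, replicate (nregs S1) Old @ m2, nregs S1 + u2, \<gamma>, en 1 q'))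
     ` (trans S2 \<times> LS (nregs S1))"
    unfolding B2_def by (auto simp: image_iff) (rule bexI[rotated], assumption, rule bexI[rotated], assumption, simp)
  then have fB2: "finite (B2 S1 S2)" using f1 finite_LS by (meson finite_SigmaI finite_imageI finite_subset)
  have "{r. (en 0 (init S1), r) \<in> B1 S1 S2 \<or> (en 1 (init S2), r) \<in> B2 S1 S2} \<subseteq> snd ` (B1 S1 S2 \<union> B2 S1 S2)"
    by (auto simp: image_iff) force+
  then have "finite (BX S1 S2)" using fB1 fB2 unfolding BX_def by (meson finite_UnI finite_imageI finite_subset)
  then show "finite (B1 S1 S2 \<union> B2 S1 S2 \<union> BX S1 S2)" using fB1 fB2 by simp
  show "length (reg0 S1 @ reg0 S2) = nregs S1 + nregs S2" using A by (simp add: srtA_def wf_srt_def)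
next
  have *: "\<And>q \<sigma> l m u \<gamma> q'. (q, \<sigma>, l, m, u, \<gamma>, q') \<in> B1 S1 S2 \<union> B2 S1 S2 \<Longrightarrow>
    length l = nregs S1 + nregs S2 \<and> length m = nregs S1 + nregs S2 \<and> u < nregs S1 + nregs S2 \<and> set m \<subseteq> {Old, New}"
  proof -
    fix q \<sigma> l m u \<gamma> q' assume "(q, \<sigma>, l, m, u, \<gamma>, q') \<in> B1 S1 S2 \<union> B2 S1 S2"
    then show "length l = nregs S1 + nregs S2 \<and> length m = nregs S1 + nregs S2 \<and> u < nregs S1 + nregs S2 \<and> set m \<subseteq> {Old, New}"
    proof
      assume "(q, \<sigma>, l, m, u, \<gamma>, q') \<in> B1 S1 S2"
      then obtain q0 l1 m1 q1' L where "l = l1 @ L" "m = m1 @ replicate (nregs S2) Old"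
        "(q0, \<sigma>, l1, m1, u, \<gamma>, q1') \<in> trans S1" "L \<in> LS (nregs S2)"
        unfolding B1_def by blast
      then show ?thesis using srtA_tr[OF A(1)] by (fastforce simp: LS_def)
    next
      assume "(q, \<sigma>, l, m, u, \<gamma>, q') \<in> B2 S1 S2"
      then obtain q0 l2 m2 u2 q1' L where "l = L @ l2" "m = replicate (nregs S1) Old @ m2" "u = nregs S1 + u2"
        "(q0, \<sigma>, l2, m2, u2, \<gamma>, q1') \<in> trans S2" "L \<in> LS (nregs S1)"
        unfolding B2_def by blast
      then show ?thesis using srtA_tr[OF A(2)] by (fastforce simp: LS_def)
    qed
  qed
  fix q \<sigma> l m u \<gamma> q'
  assume "(q, \<sigma>, l, m, u, \<gamma>, q') \<in> B1 S1 S2 \<union> B2 S1 S2 \<union> BX S1 S2"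
  then show "length l = nregs S1 + nregs S2 \<and> length m = nregs S1 + nregs S2 \<and> u < nregs S1 + nregs S2 \<and> set m \<subseteq> {Old, New}"
    using * unfolding BX_def by blast
qed

lemma Utr:
  "(en 0 q, \<sigma>, l, m, u, \<gamma>, q'') \<in> trans (Usrt S1 S2) \<longleftrightarrow> (en 0 q, \<sigma>, l, m, u, \<gamma>, q'') \<in> B1 S1 S2"
  "(en 1 q, \<sigma>, l, m, u, \<gamma>, q'') \<in> trans (Usrt S1 S2) \<longleftrightarrow> (en 1 q, \<sigma>, l, m, u, \<gamma>, q'') \<in> B2 S1 S2"
  "(en 2 0, \<sigma>, l, m, u, \<gamma>, q'') \<in> trans (Usrt S1 S2) \<longleftrightarrow>
     (en 0 (init S1), \<sigma>, l, m, u, \<gamma>, q'') \<in> B1 S1 S2 \<or> (en 1 (init S2), \<sigma>, l, m, u, \<gamma>, q'') \<in> B2 S1 S2"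
  by (auto simp: Usrt_def B1_mem B2_mem BX_mem)

lemma Ustep2: "step (Usrt S1 S2) (en 2 0, R) x y c \<longleftrightarrow>
   step (Usrt S1 S2) (en 0 (init S1), R) x y c \<or> step (Usrt S1 S2) (en 1 (init S2), R) x y c"
  unfolding step_def fst_conv snd_conv Utr by blast

lemma Ustep0:
  assumes A: "srtA S1" and L: "length R = nregs S1 + nregs S2"
    and st: "step (Usrt S1 S2) (en 0 q, R) (\<sigma>, d) (\<gamma>, e) (q'', R')"
  shows "\<exists>q1'. q'' = en 0 q1' \<and> step S1 (q, take (nregs S1) R) (\<sigma>, d) (\<gamma>, e) (q1', take (nregs S1) R')
     \<and> length R' = nregs S1 + nregs S2"
proof -
  obtain l m u where tr: "(en 0 q, \<sigma>, l, m, u, \<gamma>, q'') \<in> trans (Usrt S1 S2)"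
    and g: "\<forall>i < nregs S1 + nregs S2. l ! i = cmpof d (R ! i)" and lR': "length R' = nregs S1 + nregs S2"
    and up: "\<forall>i < nregs S1 + nregs S2. R' ! i = upd_val (m ! i) (R ! i) d" and e: "e = R' ! u"
    using st unfolding step_iff by (auto simp: Usrt_def)
  then obtain l1 m1 q1' L where h: "l = l1 @ L" "m = m1 @ replicate (nregs S2) Old" "q'' = en 0 q1'"
    "(q, \<sigma>, l1, m1, u, \<gamma>, q1') \<in> trans S1"
    unfolding Utr B1_mem by blast
  note t = srtA_tr[OF A h(4)]
  have "step S1 (q, take (nregs S1) R) (\<sigma>, d) (\<gamma>, e) (q1', take (nregs S1) R')"
    unfolding step_iff
  proof (intro exI conjI)
    show "(q, \<sigma>, l1, m1, u, \<gamma>, q1') \<in> trans S1" by (rule h(4))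
    show "\<forall>i<nregs S1. l1 ! i = cmpof d (take (nregs S1) R ! i)"
    proof (intro allI impI)
      fix i assume i: "i < nregs S1"
      have "l ! i = l1 ! i" using h(1) t(1) i by (simp add: nth_append)
      then show "l1 ! i = cmpof d (take (nregs S1) R ! i)" using g i by simp
    qed
    show "length (take (nregs S1) R') = nregs S1" using lR' by simp
    show "\<forall>i<nregs S1. take (nregs S1) R' ! i = upd_val (m1 ! i) (take (nregs S1) R ! i) d"
      using up t h by (auto simp: nth_append)
    show "e = take (nregs S1) R' ! u" using e t by simp
  qed
  then show ?thesis using h lR' by blast
qed

lemma Ustep1:
  assumes A: "srtA S2" and L: "length R = nregs S1 + nregs S2"
    and st: "step (Usrt S1 S2) (en 1 q, R) (\<sigma>, d) (\<gamma>, e) (q'', R')"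
  shows "\<exists>q2'. q'' = en 1 q2' \<and> step S2 (q, drop (nregs S1) R) (\<sigma>, d) (\<gamma>, e) (q2', drop (nregs S1) R')
     \<and> length R' = nregs S1 + nregs S2"
proof -
  obtain l m u where tr: "(en 1 q, \<sigma>, l, m, u, \<gamma>, q'') \<in> trans (Usrt S1 S2)"
    and g: "\<forall>i < nregs S1 + nregs S2. l ! i = cmpof d (R ! i)" and lR': "length R' = nregs S1 + nregs S2"
    and up: "\<forall>i < nregs S1 + nregs S2. R' ! i = upd_val (m ! i) (R ! i) d" and e: "e = R' ! u"
    using st unfolding step_iff by (auto simp: Usrt_def)
  then obtain l2 m2 u2 q2' L where h: "l = L @ l2" "m = replicate (nregs S1) Old @ m2" "u = nregs S1 + u2" "q'' = en 1 q2'"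
    "(q, \<sigma>, l2, m2, u2, \<gamma>, q2') \<in> trans S2" "L \<in> LS (nregs S1)"
    unfolding Utr B2_mem by blast
  note t = srtA_tr[OF A h(5)]
  have lL: "length L = nregs S1" using h(6) by (simp add: LS_def)
  have "step S2 (q, drop (nregs S1) R) (\<sigma>, d) (\<gamma>, e) (q2', drop (nregs S1) R')"
    unfolding step_iff
  proof (intro exI conjI)
    show "(q, \<sigma>, l2, m2, u2, \<gamma>, q2') \<in> trans S2" by (rule h(5))
    show "\<forall>i<nregs S2. l2 ! i = cmpof d (drop (nregs S1) R ! i)"
    proof (intro allI impI)
      fix i assume i: "i < nregs S2"
      have "l ! (nregs S1 + i) = l2 ! i" using h(1) lL by (simp add: nth_append)
      then show "l2 ! i = cmpof d (drop (nregs S1) R ! i)" using g i L by simp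
    qed
    show "length (drop (nregs S1) R') = nregs S2" using lR' by simp
    show "\<forall>i<nregs S2. drop (nregs S1) R' ! i = upd_val (m2 ! i) (drop (nregs S1) R ! i) d"
    proof (intro allI impI)
      fix i assume i: "i < nregs S2"
      have "m ! (nregs S1 + i) = m2 ! i" using h(2) by (simp add: nth_append)
      then show "drop (nregs S1) R' ! i = upd_val (m2 ! i) (drop (nregs S1) R ! i) d" using up i L lR' by simp
    qed
    show "e = drop (nregs S1) R' ! u2" using e t h(3) lR' by simp
  qed
  then show ?thesis using h lR' by blast
qed

lemma Ustep0c:
  assumes A: "srtA S1" and L: "length R1 = nregs S1" "length R2 = nregs S2"
    and st: "step S1 (q, R1) (\<sigma>, d) (\<gamma>, e) (q1', R1')"
  shows "step (Usrt S1 S2) (en 0 q, R1 @ R2) (\<sigma>, d) (\<gamma>, e) (en 0 q1', R1' @ R2)"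
proof -
  obtain l1 m1 u1 where t1: "(q, \<sigma>, l1, m1, u1, \<gamma>, q1') \<in> trans S1"
    and g: "\<forall>i < nregs S1. l1 ! i = cmpof d (R1 ! i)" and lR': "length R1' = nregs S1"
    and up: "\<forall>i < nregs S1. R1' ! i = upd_val (m1 ! i) (R1 ! i) d" and e: "e = R1' ! u1"
    using st unfolding step_iff by blast
  note t = srtA_tr[OF A t1]
  define L where "L = map (\<lambda>j. cmpof d (R2 ! j)) [0..<nregs S2]"
  have tr: "(en 0 q, \<sigma>, l1 @ L, m1 @ replicate (nregs S2) Old, u1, \<gamma>, en 0 q1') \<in> trans (Usrt S1 S2)"
    apply (simp only: Utr B1_mem)
    apply (rule conjI, simp)
    apply (rule exI[of _ l1], rule exI[of _ m1], rule exI[of _ q1'], rule exI[of _ L])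
    using t1 by (simp add: L_def LS_def)
  show ?thesis
    unfolding step_iff
  proof (intro exI conjI)
    show "(en 0 q, \<sigma>, l1 @ L, m1 @ replicate (nregs S2) Old, u1, \<gamma>, en 0 q1') \<in> trans (Usrt S1 S2)" by (rule tr)
    show "\<forall>i<nregs (Usrt S1 S2). (l1 @ L) ! i = cmpof d ((R1 @ R2) ! i)"
      using g t L by (auto simp: Usrt_def nth_append L_def)
    show "length (R1' @ R2) = nregs (Usrt S1 S2)" using lR' L by (simp add: Usrt_def)
    show "\<forall>i<nregs (Usrt S1 S2). (R1' @ R2) ! i = upd_val ((m1 @ replicate (nregs S2) Old) ! i) ((R1 @ R2) ! i) d"
      using up t L lR' by (auto simp: Usrt_def nth_append)
    show "e = (R1' @ R2) ! u1" using e t lR' by (simp add: nth_append)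
  qed
qed

lemma Ustep1c:
  assumes A: "srtA S2" and L: "length R1 = nregs S1" "length R2 = nregs S2"
    and st: "step S2 (q, R2) (\<sigma>, d) (\<gamma>, e) (q2', R2')"
  shows "step (Usrt S1 S2) (en 1 q, R1 @ R2) (\<sigma>, d) (\<gamma>, e) (en 1 q2', R1 @ R2')"
proof -
  obtain l2 m2 u2 where t2: "(q, \<sigma>, l2, m2, u2, \<gamma>, q2') \<in> trans S2"
    and g: "\<forall>i < nregs S2. l2 ! i = cmpof d (R2 ! i)" and lR': "length R2' = nregs S2"
    and up: "\<forall>i < nregs S2. R2' ! i = upd_val (m2 ! i) (R2 ! i) d" and e: "e = R2' ! u2"
    using st unfolding step_iff by blast
  note t = srtA_tr[OF A t2]
  define L where "L = map (\<lambda>j. cmpof d (R1 ! j)) [0..<nregs S1]"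
  have tr: "(en 1 q, \<sigma>, L @ l2, replicate (nregs S1) Old @ m2, nregs S1 + u2, \<gamma>, en 1 q2') \<in> trans (Usrt S1 S2)"
    apply (simp only: Utr B2_mem)
    apply (rule conjI, simp)
    apply (rule exI[of _ l2], rule exI[of _ m2], rule exI[of _ u2], rule exI[of _ q2'], rule exI[of _ L])
    using t2 by (simp add: L_def LS_def)
  show ?thesis
    unfolding step_iff
  proof (intro exI conjI)
    show "(en 1 q, \<sigma>, L @ l2, replicate (nregs S1) Old @ m2, nregs S1 + u2, \<gamma>, en 1 q2') \<in> trans (Usrt S1 S2)" by (rule tr)
    show "\<forall>i<nregs (Usrt S1 S2). (L @ l2) ! i = cmpof d ((R1 @ R2) ! i)"
      using g t L by (auto simp: Usrt_def nth_append L_def)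
    show "length (R1 @ R2') = nregs (Usrt S1 S2)" using lR' L by (simp add: Usrt_def)
    show "\<forall>i<nregs (Usrt S1 S2). (R1 @ R2') ! i = upd_val ((replicate (nregs S1) Old @ m2) ! i) ((R1 @ R2) ! i) d"
      using up t L lR' by (auto simp: Usrt_def nth_append)
    show "e = (R1 @ R2') ! (nregs S1 + u2)" using e t L by (simp add: nth_append)
  qed
qed

inductive_cases Urun_consE: "run S c (x # xs) ys c'"

lemma Urun0:
  assumes A: "srtA S1"
  shows "run (Usrt S1 S2) c s t c' \<Longrightarrow> c = (en 0 q, R) \<Longrightarrow> length R = nregs S1 + nregs S2 \<Longrightarrow>
    \<exists>c1'. run S1 (q, take (nregs S1) R) s t c1'"
proof (induction arbitrary: q R rule: run.induct)
  case (run_nil c)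
  then show ?case by (meson run.run_nil)
next
  case (run_cons c x y c'' xs ys c')
  obtain \<sigma> d where x: "x = (\<sigma>, d)" by fastforce
  obtain z e where y: "y = (z, e)" by fastforce
  obtain q'' R'' where c'': "c'' = (q'', R'')" by fastforce
  from Ustep0[OF A run_cons.prems(2) run_cons.hyps(1)[unfolded run_cons.prems(1) x y c'']]
  obtain q1' where h: "q'' = en 0 q1'" "step S1 (q, take (nregs S1) R) (\<sigma>, d) (z, e) (q1', take (nregs S1) R'')"
    "length R'' = nregs S1 + nregs S2" by blast
  from run_cons.IH[OF _ h(3)] c'' h(1) obtain c1' where "run S1 (q1', take (nregs S1) R'') xs ys c1'" by blast
  then show ?case using run.run_cons[OF h(2)] x y by blast
qed

lemma Urun1:
  assumes A: "srtA S2"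
  shows "run (Usrt S1 S2) c s t c' \<Longrightarrow> c = (en 1 q, R) \<Longrightarrow> length R = nregs S1 + nregs S2 \<Longrightarrow>
    \<exists>c2'. run S2 (q, drop (nregs S1) R) s t c2'"
proof (induction arbitrary: q R rule: run.induct)
  case (run_nil c)
  then show ?case by (meson run.run_nil)
next
  case (run_cons c x y c'' xs ys c')
  obtain \<sigma> d where x: "x = (\<sigma>, d)" by fastforce
  obtain z e where y: "y = (z, e)" by fastforce
  obtain q'' R'' where c'': "c'' = (q'', R'')" by fastforce
  from Ustep1[OF A run_cons.prems(2) run_cons.hyps(1)[unfolded run_cons.prems(1) x y c'']]
  obtain q2' where h: "q'' = en 1 q2'" "step S2 (q, drop (nregs S1) R) (\<sigma>, d) (z, e) (q2', drop (nregs S1) R'')"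
    "length R'' = nregs S1 + nregs S2" by blast
  from run_cons.IH[OF _ h(3)] c'' h(1) obtain c2' where "run S2 (q2', drop (nregs S1) R'') xs ys c2'" by blast
  then show ?case using run.run_cons[OF h(2)] x y by blast
qed

lemma Urun0c:
  assumes A: "srtA S1"
  shows "run S1 c s t c1' \<Longrightarrow> c = (q, R1) \<Longrightarrow> length R1 = nregs S1 \<Longrightarrow> length R2 = nregs S2 \<Longrightarrow>
    \<exists>c'. run (Usrt S1 S2) (en 0 q, R1 @ R2) s t c'"
proof (induction arbitrary: q R1 rule: run.induct)
  case (run_nil c)
  then show ?case by (meson run.run_nil)
next
  case (run_cons c x y c'' xs ys c')
  obtain \<sigma> d where x: "x = (\<sigma>, d)" by fastforce
  obtain z e where y: "y = (z, e)" by fastforce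
  obtain q'' R'' where c'': "c'' = (q'', R'')" by fastforce
  have st: "step S1 (q, R1) (\<sigma>, d) (z, e) (q'', R'')" using run_cons.hyps(1) run_cons.prems(1) x y c'' by simp
  have lR: "length R'' = nregs S1" using st unfolding step_iff by blast
  from Ustep0c[OF A run_cons.prems(2,3) st] run_cons.IH[OF c'' lR run_cons.prems(3)]
  show ?case using run.run_cons x y by blast
qed

lemma Urun1c:
  assumes A: "srtA S2"
  shows "run S2 c s t c2' \<Longrightarrow> c = (q, R2) \<Longrightarrow> length R1 = nregs S1 \<Longrightarrow> length R2 = nregs S2 \<Longrightarrow>
    \<exists>c'. run (Usrt S1 S2) (en 1 q, R1 @ R2) s t c'"
proof (induction arbitrary: q R2 rule: run.induct)
  case (run_nil c)
  then show ?case by (meson run.run_nil)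
next
  case (run_cons c x y c'' xs ys c')
  obtain \<sigma> d where x: "x = (\<sigma>, d)" by fastforce
  obtain z e where y: "y = (z, e)" by fastforce
  obtain q'' R'' where c'': "c'' = (q'', R'')" by fastforce
  have st: "step S2 (q, R2) (\<sigma>, d) (z, e) (q'', R'')" using run_cons.hyps(1) run_cons.prems(1) x y c'' by simp
  have lR: "length R'' = nregs S2" using st unfolding step_iff by blast
  from Ustep1c[OF A run_cons.prems(2,3) st] run_cons.IH[OF c'' run_cons.prems(2) lR]
  show ?case using run.run_cons x y by blast
qed

lemma run_cons_iff: "(\<exists>c'. run S c (x # xs) t c') \<longleftrightarrow> (\<exists>y ys c'' c'. t = y # ys \<and> step S c x y c'' \<and> run S c'' xs ys c')"
  apply (rule iffI)
   apply (erule exE, erule Urun_consE, blast)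
  apply (blast intro: run.run_cons)
  done

lemma Urun:
  assumes A: "srtA S1" "srtA S2"
  shows "(\<exists>c'. run (Usrt S1 S2) (init (Usrt S1 S2), reg0 (Usrt S1 S2)) s t c') \<longleftrightarrow>
    (\<exists>c'. run S1 (init S1, reg0 S1) s t c') \<or> (\<exists>c'. run S2 (init S2, reg0 S2) s t c')"
proof -
  have l: "length (reg0 S1) = nregs S1" "length (reg0 S2) = nregs S2"
    using A by (auto simp: srtA_def wf_srt_def)
  have i: "init (Usrt S1 S2) = en 2 0" "reg0 (Usrt S1 S2) = reg0 S1 @ reg0 S2" by (simp_all add: Usrt_def)
  let ?R = "reg0 S1 @ reg0 S2"
  have key: "(\<exists>c'. run (Usrt S1 S2) (en 2 0, ?R) s t c') \<longleftrightarrow>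
    (\<exists>c'. run (Usrt S1 S2) (en 0 (init S1), ?R) s t c') \<or> (\<exists>c'. run (Usrt S1 S2) (en 1 (init S2), ?R) s t c')"
  proof (cases s)
    case Nil
    have h: "\<And>S c. (\<exists>c'. run S c [] t c') \<longleftrightarrow> t = []"
      using run_length run.run_nil by fastforce
    show ?thesis unfolding Nil h by simp
  next
    case (Cons x xs)
    show ?thesis unfolding Cons run_cons_iff Ustep2 by blast
  qed
  have "(\<exists>c'. run (Usrt S1 S2) (en 0 (init S1), ?R) s t c') \<longleftrightarrow> (\<exists>c'. run S1 (init S1, reg0 S1) s t c')"
    using Urun0[OF A(1) _ refl, where q="init S1" and R="reg0 S1 @ reg0 S2" and s=s and t=t] Urun0c[OF A(1) _ refl l] l by auto
  moreover have "(\<exists>c'. run (Usrt S1 S2) (en 1 (init S2), ?R) s t c') \<longleftrightarrow> (\<exists>c'. run S2 (init S2, reg0 S2) s t c')"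
    using Urun1[OF A(2) _ refl, where q="init S2" and R="reg0 S1 @ reg0 S2" and s=s and t=t] Urun1c[OF A(2) _ refl l(1) l(2)] l by auto
  ultimately show ?thesis using key i by simp
qed


lemma GL_comp: "GL True (\<lambda>\<sigma> \<gamma> \<sigma>2 \<theta>. \<sigma>2 = \<gamma>) (\<lambda>\<gamma> \<theta>. \<theta>) s t1 s2 t2 t \<Longrightarrow> s2 = t1 \<and> t2 = t"
  by (induction rule: GL.induct) auto

lemma GL_comp_intro: "length s = length t1 \<Longrightarrow> length t1 = length t \<Longrightarrow>
   GL True (\<lambda>\<sigma> \<gamma> \<sigma>2 \<theta>. \<sigma>2 = \<gamma>) (\<lambda>\<gamma> \<theta>. \<theta>) s t1 t1 t t"
proof (induction s t1 t rule: list_induct3)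
  case Nil
  then show ?case by (rule GL_nil)
next
  case (Cons x xs y ys z zs)
  obtain \<sigma> d where x: "x = (\<sigma>, d)" by fastforce
  obtain \<gamma> d' where y: "y = (\<gamma>, d')" by fastforce
  obtain \<theta> e where z: "z = (\<theta>, e)" by fastforce
  have "GL True (\<lambda>\<sigma> \<gamma> \<sigma>2 \<theta>. \<sigma>2 = \<gamma>) (\<lambda>\<gamma> \<theta>. \<theta>) ((\<sigma>, d) # xs) ((\<gamma>, d') # ys) ((\<gamma>, if True then d' else d) # ys)
     ((\<theta>, e) # zs) (((\<lambda>\<gamma> \<theta>. \<theta>) \<gamma> \<theta>, if True then e else d') # zs)"
    by (rule GL_cons) (use Cons in auto)
  then show ?case using x y z by simp
qed

lemma GL_inter: "GL False (\<lambda>\<sigma> \<gamma> \<sigma>2 \<gamma>2. \<sigma>2 = \<sigma> \<and> \<gamma>2 = \<gamma>) (\<lambda>\<gamma> \<gamma>2. \<gamma>) s t1 s2 t2 t \<Longrightarrow> s2 = s \<and> t1 = t \<and> t2 = t"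
  by (induction rule: GL.induct) auto

lemma GL_inter_intro: "length s = length t \<Longrightarrow>
   GL False (\<lambda>\<sigma> \<gamma> \<sigma>2 \<gamma>2. \<sigma>2 = \<sigma> \<and> \<gamma>2 = \<gamma>) (\<lambda>\<gamma> \<gamma>2. \<gamma>) s t s t t"
proof (induction s t rule: list_induct2)
  case Nil
  then show ?case by (rule GL_nil)
next
  case (Cons x xs y ys)
  obtain \<sigma> d where x: "x = (\<sigma>, d)" by fastforce
  obtain \<gamma> d' where y: "y = (\<gamma>, d')" by fastforce
  have "GL False (\<lambda>\<sigma> \<gamma> \<sigma>2 \<gamma>2. \<sigma>2 = \<sigma> \<and> \<gamma>2 = \<gamma>) (\<lambda>\<gamma> \<gamma>2. \<gamma>) ((\<sigma>, d) # xs) ((\<gamma>, d') # ys) ((\<sigma>, if False then d' else d) # xs)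
     ((\<gamma>, d') # ys) (((\<lambda>\<gamma> \<gamma>2. \<gamma>) \<gamma> \<gamma>, if False then d' else d') # ys)"
    by (rule GL_cons) (use Cons in auto)
  then show ?case using x y by simp
qed

lemma sem_comp:
  fixes S1 :: "('a, 'b, 'd::{linorder,group_add}) srt" and S2 :: "('b, 'c, 'd) srt"
  assumes A: "srtA S1" "srtA S2"
  shows "sem (Csrt True (\<lambda>\<sigma> \<gamma> \<sigma>2 \<theta>. \<sigma>2 = \<gamma>) (\<lambda>\<gamma> \<theta>. \<theta>) S1 S2) = comp_tr (sem S1) (sem S2)"
  (is "sem ?C = _")
proof
  show "sem ?C \<subseteq> comp_tr (sem S1) (sem S2)"
  proof
    fix w assume "w \<in> sem ?C"
    then obtain s t where w: "w = zip s t" "length s = length t"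
      using sem_elem by blast
    with \<open>w \<in> sem ?C\<close> have "\<exists>c'. run ?C (init ?C, reg0 ?C) s t c'" using sem_iff[OF w(2)] by simp
    then obtain t1 s2 t2 c1' c2' where r: "run S1 (init S1, reg0 S1) s t1 c1'" "run S2 (init S2, reg0 S2) s2 t2 c2'"
      "GL True (\<lambda>\<sigma> \<gamma> \<sigma>2 \<theta>. \<sigma>2 = \<gamma>) (\<lambda>\<gamma> \<theta>. \<theta>) s t1 s2 t2 t"
      using Csem[OF A] by blast
    from GL_comp[OF r(3)] r(1,2) have r2: "run S2 (init S2, reg0 S2) t1 t c2'" by simp
    have l: "length s = length t1" "length t1 = length t" using run_length r(1) r2 by blast+
    have "zip s t1 \<in> sem S1" using sem_iff[OF l(1)] r(1) by blast
    moreover have "zip t1 t \<in> sem S2" using sem_iff[OF l(2)] r2 by blast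
    ultimately show "w \<in> comp_tr (sem S1) (sem S2)" unfolding comp_tr_def mem_Collect_eq
      by (intro exI[of _ s] exI[of _ t] conjI exI[of _ t1]) (use w l in auto)
  qed
  show "comp_tr (sem S1) (sem S2) \<subseteq> sem ?C"
  proof
    fix w assume "w \<in> comp_tr (sem S1) (sem S2)"
    then obtain s t s3 where w: "w = zip s t" "length s = length t" "length s3 = length s"
      "zip s s3 \<in> sem S1" "zip s3 t \<in> sem S2"
      unfolding comp_tr_def by blast
    obtain c1' where r1: "run S1 (init S1, reg0 S1) s s3 c1'" using sem_iff[of s s3] w by auto
    obtain c2' where r2: "run S2 (init S2, reg0 S2) s3 t c2'" using sem_iff[of s3 t] w by auto
    have "GL True (\<lambda>\<sigma> \<gamma> \<sigma>2 \<theta>. \<sigma>2 = \<gamma>) (\<lambda>\<gamma> \<theta>. \<theta>) s s3 s3 t t" using GL_comp_intro[of s s3 t] w by simp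
    then have "\<exists>c'. run ?C (init ?C, reg0 ?C) s t c'" using Csem[OF A] r1 r2 by blast
    then show "w \<in> sem ?C" using sem_iff[of s t] w by simp
  qed
qed

lemma sem_inter:
  fixes S1 :: "('a, 'b, 'd::{linorder,group_add}) srt" and S2 :: "('a, 'b, 'd) srt"
  assumes A: "srtA S1" "srtA S2"
  shows "sem (Csrt False (\<lambda>\<sigma> \<gamma> \<sigma>2 \<gamma>2. \<sigma>2 = \<sigma> \<and> \<gamma>2 = \<gamma>) (\<lambda>\<gamma> \<gamma>2. \<gamma>) S1 S2) = sem S1 \<inter> sem S2"
  (is "sem ?C = _")
proof
  show "sem ?C \<subseteq> sem S1 \<inter> sem S2"
  proof
    fix w assume "w \<in> sem ?C"
    then obtain s t where w: "w = zip s t" "length s = length t"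
      using sem_elem by blast
    with \<open>w \<in> sem ?C\<close> have "\<exists>c'. run ?C (init ?C, reg0 ?C) s t c'" using sem_iff[OF w(2)] by simp
    then obtain t1 s2 t2 c1' c2' where r: "run S1 (init S1, reg0 S1) s t1 c1'" "run S2 (init S2, reg0 S2) s2 t2 c2'"
      "GL False (\<lambda>\<sigma> \<gamma> \<sigma>2 \<gamma>2. \<sigma>2 = \<sigma> \<and> \<gamma>2 = \<gamma>) (\<lambda>\<gamma> \<gamma>2. \<gamma>) s t1 s2 t2 t"
      using Csem[OF A] by blast
    from GL_inter[OF r(3)] r(1,2) have "run S1 (init S1, reg0 S1) s t c1'" "run S2 (init S2, reg0 S2) s t c2'" by simp_all
    then show "w \<in> sem S1 \<inter> sem S2" using sem_iff[OF w(2)] w(1) by blast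
  qed
  show "sem S1 \<inter> sem S2 \<subseteq> sem ?C"
  proof
    fix w assume "w \<in> sem S1 \<inter> sem S2"
    then obtain s t where w: "w = zip s t" "length s = length t" "zip s t \<in> sem S1" "zip s t \<in> sem S2"
      using sem_elem by blast
    obtain c1' where r1: "run S1 (init S1, reg0 S1) s t c1'" using sem_iff[of s t] w by auto
    obtain c2' where r2: "run S2 (init S2, reg0 S2) s t c2'" using sem_iff[of s t] w by auto
    have "GL False (\<lambda>\<sigma> \<gamma> \<sigma>2 \<gamma>2. \<sigma>2 = \<sigma> \<and> \<gamma>2 = \<gamma>) (\<lambda>\<gamma> \<gamma>2. \<gamma>) s t s t t" using GL_inter_intro[of s t] w by simp
    then have "\<exists>c'. run ?C (init ?C, reg0 ?C) s t c'" using Csem[OF A] r1 r2 by blast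
    then show "w \<in> sem ?C" using sem_iff[of s t] w by simp
  qed
qed

lemma sem_union:
  fixes S1 :: "('a, 'b, 'd::{linorder,group_add}) srt" and S2 :: "('a, 'b, 'd) srt"
  assumes A: "srtA S1" "srtA S2"
  shows "sem (Usrt S1 S2) = sem S1 \<union> sem S2"
proof (rule set_eqI)
  fix w
  show "w \<in> sem (Usrt S1 S2) \<longleftrightarrow> w \<in> sem S1 \<union> sem S2"
  proof (cases "\<exists>s t. w = zip s t \<and> length s = length t")
    case True
    then obtain s t where w: "w = zip s t" "length s = length t" by blast
    show ?thesis unfolding w(1) Un_iff sem_iff[OF w(2)] by (rule Urun[OF A])
  next
    case False
    then show ?thesis using sem_elem by blast
  qed
qed

theorem theorem3p19:
  assumes "infinite (UNIV :: 'd::{linorder,group_add} set)"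
  shows "(\<forall>(S1::('a::finite, 'b::finite, 'd) srt) S2. srtA S1 \<and> srtA S2 \<longrightarrow>
            (\<exists>S::('a, 'b, 'd) srt. srtA S \<and> sem S = sem S1 \<union> sem S2) \<and>
            (\<exists>S::('a, 'b, 'd) srt. srtA S \<and> sem S = sem S1 \<inter> sem S2))
       \<and> (\<forall>(S1::('a, 'b, 'd) srt) (S2::('b, 'c::finite, 'd) srt). srtA S1 \<and> srtA S2 \<longrightarrow>
            (\<exists>S::('a, 'c, 'd) srt. srtA S \<and> sem S = comp_tr (sem S1) (sem S2)))"
proof (intro conjI allI impI)
  fix S1 S2 :: "('a, 'b, 'd) srt"
  assume h: "srtA S1 \<and> srtA S2"
  show "\<exists>S::('a, 'b, 'd) srt. srtA S \<and> sem S = sem S1 \<union> sem S2"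
    using Usrt_A[of S1 S2] sem_union[of S1 S2] h by blast
  show "\<exists>S::('a, 'b, 'd) srt. srtA S \<and> sem S = sem S1 \<inter> sem S2"
    using Csrt_A[of S1 S2 False "\<lambda>\<sigma> \<gamma> \<sigma>2 \<gamma>2. \<sigma>2 = \<sigma> \<and> \<gamma>2 = \<gamma>" "\<lambda>\<gamma> \<gamma>2. \<gamma>"] sem_inter[of S1 S2] h by blast
next
  fix S1 :: "('a, 'b, 'd) srt" and S2 :: "('b, 'c, 'd) srt"
  assume h: "srtA S1 \<and> srtA S2"
  show "\<exists>S::('a, 'c, 'd) srt. srtA S \<and> sem S = comp_tr (sem S1) (sem S2)"
    using Csrt_A[of S1 S2 True "\<lambda>\<sigma> \<gamma> \<sigma>2 \<theta>. \<sigma>2 = \<gamma>" "\<lambda>\<gamma> \<theta>. \<theta>"] sem_comp[of S1 S2] h by blast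
qed

end
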